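(* Let $\mathcal{A},\mathcal{B},\mathcal{C}$ be finite-dimensional complex Hilbert spaces with $\dim\mathcal{C}\geq\dim(\mathcal{A}\otimes\mathcal{B})$, let $\ket{\mathrm{idle}}\in\mathcal{B}$ be a unit vector, and let $L$ be a subunitary operator on $\mathcal{A}\otimes\mathcal{B}$ with $L(\ket{\varphi}\otimes\ket{\mathrm{idle}})=\ket{\varphi}\otimes\ket{\mathrm{idle}}$ for all $\ket{\varphi}\in\mathcal{A}$. Let $\ket{\xi}\neq 0$ and $\ket{\tau}$ be vectors in $\mathcal{A}\otimes\mathcal{B}\otimes\mathcal{C}$. Let $\overline{\pi}$ be a positive semidefinite operator on $\mathcal{A}\otimes\mathcal{B}$ satisfying $$\mathrm{tr}_{\mathcal{B}}\left(L\overline{\pi}L^\dagger-\overline{\pi}\right)=\mathrm{tr}_{\mathcal{B}\mathcal{C}}\left(\ket{\tau}\bra{\tau}-\ket{\xi}\bra{\xi}\right),$$ and let $\ket{v}\in\mathcal{A}\otimes\mathcal{B}\otimes\mathcal{C}$ be a purification of $\overline{\pi}$, i.e. $\mathrm{tr}_{\mathcal{C}}\ket{v}\bra{v}=\overline{\pi}$. Then for every integer $T'>0$, the operators $$\pi^j=\left(\frac{T'-j}{T'}\,\mathrm{tr}_{\mathcal{B}\mathcal{C}}\ket{\xi}\bra{\xi}+\frac{j}{T'}\,\mathrm{tr}_{\mathcal{B}\mathcal{C}}\ket{\tau}\bra{\tau}\right)\otimes\ket{\mathrm{idle}}\bra{\mathrm{idle}}+\frac{\overline{\pi}}{T'},\qquad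 0\leq j<T',$$ are positive semidefinite and satisfy $\mathrm{tr}_{\mathcal{B}}\pi^{j+1}=\mathrm{tr}_{\mathcal{B}}(L\pi^jL^\dagger)$ for $0\leq j\leq T'-2$, and they constitute a $T'$-timestep algorithm (with ancilla space $\mathcal{C}\otimes\mathbb{C}^2$, i.e. an added qubit) transforming $$\ket{\xi}\otimes\ket{0}+\frac{\ket{v}}{\sqrt{T'}}\otimes\ket{1}\ \mapsto\ \ket{\tau}\otimes\ket{0}+\frac{\ket{v}}{\sqrt{T'}}\otimes\ket{1}.$$
   Context: A $T$-timestep algorithm with ancilla space $\mathcal{C}'$ consists of unitaries $U_0,\dots,U_T$ on $\mathcal{B}\otimes\mathcal{C}'$ and applies $E=(I_{\mathcal{A}}\otimes U_T)(L\otimes I_{\mathcal{C}'})(I_{\mathcal{A}}\otimes U_{T-1})\cdots(L\otimes I_{\mathcal{C}'})(I_{\mathcal{A}}\otimes U_0)$ to a state in $\mathcal{A}\otimes\mathcal{B}\otimes\mathcal{C}'$; it transforms $\ket{x}\mapsto\ket{y}$ if $E\ket{x}=\ket{y}$. Its intermediate states are $\ket{\Phi^j}=(I_{\mathcal{A}}\otimes U_j)(L\otimes I)\cdots(L\otimes I)(I_{\mathcal{A}}\otimes U_0)\ket{x}$ ($j$ applications of $L$), and "the sequence $(\pi^j)$ constitutes the algorithm" means $\pi^j=\mathrm{tr}_{\mathcal{C}'}\ket{\Phi^j}\bra{\Phi^j}$. Subunitary means $\|L\ket{\varphi}\|\leq\|\ket{\varphi}\|$ for all $\ket{\varphi}$.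 States need not be normalized; $\mathrm{tr}_{\mathcal{B}}$ etc. are partial traces. *)

theory Defs
  imports "Jordan_Normal_Form.Matrix" Complex_Main
begin

text \<open>Finite-dimensional complex Hilbert spaces are modelled as C^n (vectors of
  dimension n).  Tensor products use the Kronecker (lexicographic) index
  convention: index (i,k) of X \<otimes> Y (dim Y = m) is i*m + k.\<close>

definition kron_vec :: "complex vec \<Rightarrow> complex vec \<Rightarrow> complex vec" where
  "kron_vec x y = vec (dim_vec x * dim_vec y)
     (\<lambda>i. x $ (i div dim_vec y) * y $ (i mod dim_vec y))"

definition kron_mat :: "complex mat \<Rightarrow> complex mat \<Rightarrow> complex mat" where
  "kron_mat A B = mat (dim_row A * dim_row B) (dim_col A * dim_col B)
     (\<lambda>(i,j). A $$ (i div dim_row B, j div dim_col B) * B $$ (i mod dim_row B, j mod dim_col B))"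

definition dagger :: "complex mat \<Rightarrow> complex mat" where
  "dagger A = mat (dim_col A) (dim_row A) (\<lambda>(i,j). cnj (A $$ (j,i)))"

definition ket_bra :: "complex vec \<Rightarrow> complex mat" where
  "ket_bra x = mat (dim_vec x) (dim_vec x) (\<lambda>(i,j). x $ i * cnj (x $ j))"

definition vnorm :: "complex vec \<Rightarrow> real" where
  "vnorm x = sqrt (\<Sum>i<dim_vec x. (cmod (x $ i))\<^sup>2)"

definition ptrace2 :: "nat \<Rightarrow> nat \<Rightarrow> complex mat \<Rightarrow> complex mat" where
  "ptrace2 dX dY M = mat dX dX (\<lambda>(i,j). \<Sum>k<dY. M $$ (i*dY + k, j*dY + k))"

text \<open>Positive semidefinite operator on C^n: <v, M v> is real and nonnegative
  for all v (over the complex numbers this is equivalent to Hermitian with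
  nonnegative spectrum).\<close>
definition psd :: "nat \<Rightarrow> complex mat \<Rightarrow> bool" where
  "psd n M \<longleftrightarrow> M \<in> carrier_mat n n \<and>
     (\<forall>v \<in> carrier_vec n. let z = (\<Sum>i<n. cnj (v $ i) * (M *\<^sub>v v) $ i)
                           in Im z = 0 \<and> Re z \<ge> 0)"

definition subunitary :: "nat \<Rightarrow> complex mat \<Rightarrow> bool" where
  "subunitary n L \<longleftrightarrow> L \<in> carrier_mat n n \<and>
     (\<forall>\<phi> \<in> carrier_vec n. vnorm (L *\<^sub>v \<phi>) \<le> vnorm \<phi>)"

definition unitary :: "nat \<Rightarrow> complex mat \<Rightarrow> bool" where
  "unitary n U \<longleftrightarrow> U \<in> carrier_mat n n \<and> dagger U * U = 1\<^sub>m n"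

fun alg_state :: "nat \<Rightarrow> nat \<Rightarrow> complex mat \<Rightarrow> (nat \<Rightarrow> complex mat) \<Rightarrow> complex vec \<Rightarrow> nat \<Rightarrow> complex vec" where
  "alg_state dA dC' L U x 0 = kron_mat (1\<^sub>m dA) (U 0) *\<^sub>v x"
| "alg_state dA dC' L U x (Suc j) =
     kron_mat (1\<^sub>m dA) (U (Suc j)) *\<^sub>v (kron_mat L (1\<^sub>m dC') *\<^sub>v alg_state dA dC' L U x j)"

definition constitutes_algorithm ::
  "nat \<Rightarrow> nat \<Rightarrow> nat \<Rightarrow> complex mat \<Rightarrow> nat \<Rightarrow> (nat \<Rightarrow> complex mat) \<Rightarrow> complex vec \<Rightarrow> complex vec \<Rightarrow> bool" where
  "constitutes_algorithm dA dB dC' L T \<pi> x y \<longleftrightarrow>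
     (\<exists>U. (\<forall>j\<le>T. unitary (dB * dC') (U j)) \<and>
          alg_state dA dC' L U x T = y \<and>
          (\<forall>j<T. \<pi> j = ptrace2 (dA * dB) dC' (ket_bra (alg_state dA dC' L U x j))))"

end

theory Submission
  imports Defs
begin


lemma sum_prod_split:
  fixes f :: "nat \<Rightarrow> 'a::comm_monoid_add"
  shows "(\<Sum>k<m*n. f k) = (\<Sum>a<m. \<Sum>b<n. f (a*n+b))"
proof -
  have "(\<Sum>k<m*n. f k) = (\<Sum>a<m. sum f {a*n..<a*n+n})"
    using sum.nat_group[of f n m] by simp
  also have "\<dots> = (\<Sum>a<m. \<Sum>b<n. f (a*n+b))"
  proof (rule sum.cong[OF refl])
    fix a
    show "sum f {a*n..<a*n+n} = (\<Sum>b<n. f (a*n+b))"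
    proof -
      have "sum f {a*n..<a*n+n} = sum f {0 + a*n..<n + a*n}" by (simp add: add.commute)
      also have "\<dots> = (\<Sum>b\<in>{0..<n}. f (b + a*n))" by (rule sum.shift_bounds_nat_ivl)
      finally show ?thesis by (simp add: atLeast0LessThan add.commute)
    qed
  qed
  finally show ?thesis .
qed

lemma mult_entry:
  assumes "A \<in> carrier_mat n k" "B \<in> carrier_mat k m" "i < n" "j < m"
  shows "(A * B) $$ (i,j) = (\<Sum>l<k. A $$ (i,l) * B $$ (l,j))"
  using assms by (simp add: scalar_prod_def atLeast0LessThan)

lemma mult_vec_entry:
  assumes "A \<in> carrier_mat n k" "v \<in> carrier_vec k" "i < n"
  shows "(A *\<^sub>v v) $ i = (\<Sum>l<k. A $$ (i,l) * v $ l)"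
  using assms by (simp add: scalar_prod_def atLeast0LessThan)

lemma dagger_carrier[simp]: "A \<in> carrier_mat n m \<Longrightarrow> dagger A \<in> carrier_mat m n"
  by (simp add: dagger_def)
lemma dagger_dims[simp]: "dim_row (dagger A) = dim_col A" "dim_col (dagger A) = dim_row A"
  by (simp_all add: dagger_def)
lemma dagger_index[simp]: "i < dim_col A \<Longrightarrow> j < dim_row A \<Longrightarrow> dagger A $$ (i,j) = cnj (A $$ (j,i))"
  by (simp add: dagger_def)

lemma dagger_mult:
  assumes "A \<in> carrier_mat n k" "B \<in> carrier_mat k m"
  shows "dagger (A * B) = dagger B * dagger A"
proof (rule eq_matI)
  fix i j assume ij: "i < dim_row (dagger B * dagger A)" "j < dim_col (dagger B * dagger A)"
  have dB: "dagger B \<in> carrier_mat m k" and dA: "dagger A \<in> carrier_mat k n" using assms by auto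
  have AB: "A * B \<in> carrier_mat n m" using assms by auto
  show "dagger (A * B) $$ (i, j) = (dagger B * dagger A) $$ (i, j)"
    using ij assms
    by (simp add: scalar_prod_def dagger_def mult.commute cnj_sum)
qed (use assms in auto)

lemma dagger_dagger[simp]: "dagger (dagger A) = A"
  by (rule eq_matI) (auto simp: dagger_def)

lemma dagger_one[simp]: "dagger (1\<^sub>m n) = 1\<^sub>m n"
  by (rule eq_matI) (auto simp: dagger_def)

definition unit2 :: "nat \<Rightarrow> complex mat \<Rightarrow> bool" where
  "unit2 n W \<longleftrightarrow> W \<in> carrier_mat n n \<and> dagger W * W = 1\<^sub>m n \<and> W * dagger W = 1\<^sub>m n"

lemma unit2_one: "unit2 n (1\<^sub>m n)"
  by (simp add: unit2_def)

lemma unit2_mult: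
  assumes "unit2 n V" "unit2 n W" shows "unit2 n (V * W)"
proof -
  have V: "V \<in> carrier_mat n n" and W: "W \<in> carrier_mat n n" using assms unit2_def by auto
  have dV: "dagger V \<in> carrier_mat n n" and dW: "dagger W \<in> carrier_mat n n" using V W by auto
  have "dagger (V*W) * (V*W) = dagger W * dagger V * (V * W)"
    using V W by (simp add: dagger_mult)
  also have "\<dots> = dagger W * (dagger V * (V * W))" using dV dW V W by (meson assoc_mult_mat mult_carrier_mat)
  also have "\<dots> = dagger W * ((dagger V * V) * W)" using dV dW V W by (metis assoc_mult_mat)
  also have "\<dots> = dagger W * (dagger V * V) * W" using dV dW V W by (metis assoc_mult_mat mult_carrier_mat)
  also have "\<dots> = 1\<^sub>m n" using assms W unfolding unit2_def by simp
  finally have 1: "dagger (V*W) * (V*W) = 1\<^sub>m n" .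
  have "(V*W) * dagger (V*W) = (V * W) * (dagger W * dagger V)"
    using V W by (simp add: dagger_mult)
  also have "\<dots> = V * (W * (dagger W * dagger V))" using dV dW V W by (meson assoc_mult_mat mult_carrier_mat)
  also have "\<dots> = V * ((W * dagger W) * dagger V)" using dV dW V W by (metis assoc_mult_mat)
  also have "\<dots> = V * (W * dagger W) * dagger V" using dV dW V W by (metis assoc_mult_mat mult_carrier_mat)
  also have "\<dots> = 1\<^sub>m n" using assms V unfolding unit2_def by simp
  finally show ?thesis using 1 V W unfolding unit2_def by simp
qed

lemma unit2_dagger: "unit2 n W \<Longrightarrow> unit2 n (dagger W)"
  by (simp add: unit2_def)



lemma vnorm_sq: "(vnorm u)^2 = (\<Sum>i<dim_vec u. (cmod (u $ i))^2)"
  unfolding vnorm_def by (simp add: sum_nonneg)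

lemma cnj_mult_self: "z * cnj z = complex_of_real ((cmod z)^2)"
  by (rule complex_norm_square[symmetric])

lemma vnorm_pos:
  assumes "u \<in> carrier_vec m" "u \<noteq> 0\<^sub>v m"
  shows "vnorm u > 0"
proof -
  obtain i where i: "i < m" "u $ i \<noteq> 0" using assms by (metis eq_vecI index_zero_vec(1,2) carrier_vecD)
  have "(vnorm u)^2 = (\<Sum>i<m. (cmod (u $ i))^2)" using vnorm_sq assms by simp
  also have "\<dots> > 0"
    using i by (intro sum_pos2[of _ i]) auto
  finally have "(vnorm u)^2 > 0" .
  moreover have "vnorm u \<ge> 0" unfolding vnorm_def by (simp add: sum_nonneg)
  ultimately show ?thesis by (metis less_eq_real_def power_zero_numeral zero_less_numeral less_irrefl)
qed

lemma householder:
  assumes u: "u \<in> carrier_vec m" and nz: "u \<noteq> 0\<^sub>v m"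
  shows "\<exists>V. unit2 m V \<and> (\<forall>j<m. (\<Sum>i<m. u $ i * V $$ (i,j)) = (if j = 0 then complex_of_real (vnorm u) else 0))"
proof -
  define r where "r = vnorm u"
  have rpos: "r > 0" using vnorm_pos[OF u nz] r_def by simp
  have mpos: "m > 0" using u nz by (metis eq_vecI index_zero_vec(2) carrier_vecD gr0I not_less_zero)
  define a where "a = cmod (u $ 0)"
  define t where "t = complex_of_real r * (if u $ 0 = 0 then 1 else cnj (u $ 0) / complex_of_real a)"
  have ut: "u $ 0 * t = complex_of_real (r * a)"
  proof (cases "u $ 0 = 0")
    case True thus ?thesis by (simp add: t_def a_def)
  next
    case False
    hence "a > 0" by (simp add: a_def)
    thus ?thesis using False unfolding t_def a_def
      by (simp add: field_simps cnj_mult_self power2_eq_square)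
  qed
  have tt: "t * cnj t = complex_of_real (r^2)"
  proof (cases "u $ 0 = 0")
    case True thus ?thesis by (simp add: t_def power2_eq_square)
  next
    case False
    hence "a > 0" by (simp add: a_def)
    have "t * cnj t = complex_of_real r * complex_of_real r * (u $ 0 * cnj (u $ 0)) / (complex_of_real a * complex_of_real a)"
      using False by (simp add: t_def field_simps)
    also have "\<dots> = complex_of_real (r^2)" using \<open>a > 0\<close> by (simp add: cnj_mult_self a_def power2_eq_square field_simps)
    finally show ?thesis .
  qed
  have rr: "(\<Sum>i<m. u $ i * cnj (u $ i)) = complex_of_real (r^2)"
    using vnorm_sq[of u] u r_def by (simp add: cnj_mult_self)
  define h where "h = (\<lambda>i. cnj (u $ i) + (if i = 0 then t else 0))"
  have uh: "(\<Sum>i<m. u $ i * h i) = complex_of_real (r^2 + r * a)"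
  proof -
    have e: "\<And>i. u $ i * h i = u $ i * cnj (u $ i) + (if i = 0 then u $ 0 * t else 0)"
      by (simp add: h_def algebra_simps)
    have "(\<Sum>i<m. u $ i * h i) = (\<Sum>i<m. u $ i * cnj (u $ i)) + (\<Sum>i<m. if i = 0 then u $ 0 * t else 0)"
      unfolding e sum.distrib by simp
    also have "\<dots> = complex_of_real (r^2) + u $ 0 * t" using rr mpos by (simp add: sum.delta)
    finally show ?thesis using ut by simp
  qed
  define nh where "nh = 2 * r^2 + 2 * r * a"
  have nhpos: "nh > 0" unfolding nh_def a_def using rpos by (simp add: add_pos_nonneg)
  have hh: "(\<Sum>i<m. cnj (h i) * h i) = complex_of_real nh"
  proof -
    have e: "\<And>i. cnj (h i) * h i = u $ i * cnj (u $ i) + (if i = 0 then u $ 0 * t + cnj (u $ 0 * t) + t * cnj t else 0)"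
      by (simp add: h_def algebra_simps)
    have "(\<Sum>i<m. cnj (h i) * h i) = (\<Sum>i<m. u $ i * cnj (u $ i)) + (u $ 0 * t + cnj (u $ 0 * t) + t * cnj t)"
      unfolding e sum.distrib using mpos by (simp add: sum.delta)
    also have "\<dots> = complex_of_real nh" using rr ut tt unfolding nh_def by simp
    finally show ?thesis .
  qed
  define c where "c = complex_of_real (2 / nh)"
  have cnh: "c * complex_of_real nh = 2" using nhpos by (simp add: c_def)
  have cuh: "c * (\<Sum>i<m. u $ i * h i) = 1"
  proof -
    have "2 / nh * (r^2 + r*a) = 1" using nhpos by (simp add: nh_def field_simps)
    hence "complex_of_real (2 / nh * (r^2 + r*a)) = 1" by simp
    thus ?thesis unfolding uh c_def of_real_mult .
  qed
  have cc: "cnj c = c" by (simp add: c_def)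
  define al where "al = - t / complex_of_real r"
  have alal: "cnj al * al = 1"
    using tt rpos by (simp add: al_def field_simps power2_eq_square mult.commute)
  define V where "V = mat m m (\<lambda>(i,j). al * ((if i = j then 1 else 0) - c * h i * cnj (h j)))"
  have Vc: "V \<in> carrier_mat m m" by (simp add: V_def)
  have HH: "(\<Sum>k<m. ((if k = i then 1 else 0) - c * cnj (h k) * h i) * ((if k = j then 1 else 0) - c * h k * cnj (h j)))
      = (if i = j then 1 else 0)" if ij: "i < m" "j < m" for i j
  proof -
    have e: "((if k = i then 1 else 0) - c * cnj (h k) * h i) * ((if k = j then 1 else 0) - c * h k * cnj (h j))
      = (if k = i then (if i = j then 1 else 0) else 0) - (if k = i then c * h i * cnj (h j) else 0)
        - (if k = j then c * cnj (h j) * h i else 0) + (c * c * h i * cnj (h j)) * (cnj (h k) * h k)" for k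
      by (auto simp: algebra_simps)
    have "(\<Sum>k<m. ((if k = i then 1 else 0) - c * cnj (h k) * h i) * ((if k = j then 1 else 0) - c * h k * cnj (h j)))
      = (if i = j then 1 else 0) - c * h i * cnj (h j) - c * cnj (h j) * h i + (c * c * h i * cnj (h j)) * complex_of_real nh"
      unfolding e sum.distrib sum_subtractf sum_distrib_left[symmetric] hh using ij by simp
    also have "\<dots> = (if i = j then 1 else 0) + h i * cnj (h j) * (c * (c * complex_of_real nh) - 2 * c)"
      by (simp add: algebra_simps)
    also have "\<dots> = (if i = j then 1 else 0)" using cnh by simp
    finally show ?thesis .
  qed
  have uV: "(\<Sum>i<m. u $ i * V $$ (i,j)) = (if j = 0 then complex_of_real r else 0)" if j: "j < m" for j
  proof -
    have e: "u $ i * V $$ (i,j) = al * ((if i = j then u $ j else 0) - c * cnj (h j) * (u $ i * h i))" if "i < m" for i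
      using that j by (simp add: V_def algebra_simps)
    have "(\<Sum>i<m. u $ i * V $$ (i,j)) = (\<Sum>i<m. al * ((if i = j then u $ j else 0) - c * cnj (h j) * (u $ i * h i)))"
      by (rule sum.cong) (auto simp: e)
    also have "\<dots> = al * (u $ j - cnj (h j) * (c * (\<Sum>i<m. u $ i * h i)))"
      unfolding sum_distrib_left[symmetric] sum_subtractf using j by (simp add: algebra_simps)
    also have "\<dots> = al * (u $ j - cnj (h j))" using cuh by simp
    also have "\<dots> = (if j = 0 then - al * cnj t else 0)" by (simp add: h_def)
    also have "\<dots> = (if j = 0 then complex_of_real r else 0)"
      using tt rpos by (simp add: al_def power2_eq_square)
    finally show ?thesis .
  qed
  have d1: "dagger V * V = 1\<^sub>m m"
  proof (rule eq_matI)
    fix i j assume "i < dim_row (1\<^sub>m m)" "j < dim_col (1\<^sub>m m)"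
    hence ij: "i < m" "j < m" by auto
    have "(dagger V * V) $$ (i,j) = (\<Sum>k<m. cnj (V $$ (k,i)) * V $$ (k,j))"
      using ij Vc by (simp add: scalar_prod_def atLeast0LessThan)
    also have "\<dots> = (\<Sum>k<m. (cnj al * al) * (((if k = i then 1 else 0) - c * cnj (h k) * h i) * ((if k = j then 1 else 0) - c * h k * cnj (h j))))"
      by (rule sum.cong) (use ij cc in \<open>auto simp: V_def algebra_simps\<close>)
    also have "\<dots> = (if i = j then 1 else 0)" unfolding sum_distrib_left[symmetric] HH[OF ij] alal by simp
    finally show "(dagger V * V) $$ (i,j) = 1\<^sub>m m $$ (i,j)" using ij by simp
  qed (use Vc in auto)
  have d2: "V * dagger V = 1\<^sub>m m"
  proof (rule eq_matI)
    fix i j assume "i < dim_row (1\<^sub>m m)" "j < dim_col (1\<^sub>m m)"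
    hence ij: "i < m" "j < m" by auto
    have "(V * dagger V) $$ (i,j) = (\<Sum>k<m. V $$ (i,k) * cnj (V $$ (j,k)))"
      using ij Vc by (simp add: scalar_prod_def atLeast0LessThan)
    also have "\<dots> = (\<Sum>k<m. (cnj al * al) * (((if k = i then 1 else 0) - c * cnj (h k) * h i) * ((if k = j then 1 else 0) - c * h k * cnj (h j))))"
      by (rule sum.cong) (use ij cc in \<open>auto simp: V_def algebra_simps\<close>)
    also have "\<dots> = (if i = j then 1 else 0)" unfolding sum_distrib_left[symmetric] HH[OF ij] alal by simp
    finally show "(V * dagger V) $$ (i,j) = 1\<^sub>m m $$ (i,j)" using ij by simp
  qed (use Vc in auto)
  have unit: "unit2 m V" using d1 d2 Vc unit2_def by blast
  show ?thesis using unit uV r_def by blast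
qed



definition dropc :: "complex mat \<Rightarrow> complex mat" where
  "dropc X = mat (dim_row X) (dim_col X - 1) (\<lambda>(a,e). X $$ (a, Suc e))"

definition diag1 :: "complex mat \<Rightarrow> complex mat" where
  "diag1 W = mat (Suc (dim_row W)) (Suc (dim_row W))
     (\<lambda>(i,j). if i = 0 \<and> j = 0 then 1 else if i = 0 \<or> j = 0 then 0 else W $$ (i-1, j-1))"

lemma dropc_carrier: "X \<in> carrier_mat n (Suc m) \<Longrightarrow> dropc X \<in> carrier_mat n m"
  by (simp add: dropc_def)

lemma dropc_index: "X \<in> carrier_mat n (Suc m) \<Longrightarrow> a < n \<Longrightarrow> e < m \<Longrightarrow> dropc X $$ (a,e) = X $$ (a, Suc e)"
  by (simp add: dropc_def)

lemma diag1_carrier: "W \<in> carrier_mat m m \<Longrightarrow> diag1 W \<in> carrier_mat (Suc m) (Suc m)"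
  by (simp add: diag1_def)

lemma gram_entry:
  assumes "X \<in> carrier_mat n m" "a < n" "b < n"
  shows "(X * dagger X) $$ (a,b) = (\<Sum>e<m. X $$ (a,e) * cnj (X $$ (b,e)))"
  using assms by (simp add: scalar_prod_def atLeast0LessThan)

lemma diag1_unit:
  assumes "unit2 m W" shows "unit2 (Suc m) (diag1 W)"
proof -
  have W: "W \<in> carrier_mat m m" and d1: "dagger W * W = 1\<^sub>m m" and d2: "W * dagger W = 1\<^sub>m m"
    using assms unit2_def by auto
  have D: "diag1 W \<in> carrier_mat (Suc m) (Suc m)" using W diag1_carrier by auto
  have e1: "(\<Sum>k<m. cnj (W $$ (k,i)) * W $$ (k,j)) = (if i = j then 1 else 0)" if "i < m" "j < m" for i j
  proof -
    have "(dagger W * W) $$ (i,j) = (\<Sum>k<m. cnj (W $$ (k,i)) * W $$ (k,j))"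
      using that W by (simp add: scalar_prod_def atLeast0LessThan)
    thus ?thesis using d1 that by simp
  qed
  have e2: "(\<Sum>k<m. W $$ (i,k) * cnj (W $$ (j,k))) = (if i = j then 1 else 0)" if "i < m" "j < m" for i j
  proof -
    have "(W * dagger W) $$ (i,j) = (\<Sum>k<m. W $$ (i,k) * cnj (W $$ (j,k)))"
      using that W by (simp add: scalar_prod_def atLeast0LessThan)
    thus ?thesis using d2 that by simp
  qed
  have "dagger (diag1 W) * diag1 W = 1\<^sub>m (Suc m)"
  proof (rule eq_matI)
    fix i j assume "i < dim_row (1\<^sub>m (Suc m))" "j < dim_col (1\<^sub>m (Suc m))"
    hence ij: "i < Suc m" "j < Suc m" by auto
    have "(dagger (diag1 W) * diag1 W) $$ (i,j) = (\<Sum>k<Suc m. cnj (diag1 W $$ (k,i)) * diag1 W $$ (k,j))"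
      using ij D by (simp add: scalar_prod_def atLeast0LessThan)
    also have "\<dots> = cnj (diag1 W $$ (0,i)) * diag1 W $$ (0,j) + (\<Sum>k<m. cnj (diag1 W $$ (Suc k,i)) * diag1 W $$ (Suc k,j))"
      by (rule sum.lessThan_Suc_shift)
    also have "\<dots> = 1\<^sub>m (Suc m) $$ (i,j)"
    proof (cases i)
      case 0 thus ?thesis using ij W by (cases j) (auto simp: diag1_def)
    next
      case (Suc i')
      show ?thesis
      proof (cases j)
        case 0 thus ?thesis using ij W Suc by (auto simp: diag1_def)
      next
        case (Suc j')
        thus ?thesis using ij W \<open>i = Suc i'\<close> e1[of i' j'] by (auto simp: diag1_def)
      qed
    qed
    finally show "(dagger (diag1 W) * diag1 W) $$ (i,j) = 1\<^sub>m (Suc m) $$ (i,j)" .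
  qed (use D in auto)
  moreover have "diag1 W * dagger (diag1 W) = 1\<^sub>m (Suc m)"
  proof (rule eq_matI)
    fix i j assume "i < dim_row (1\<^sub>m (Suc m))" "j < dim_col (1\<^sub>m (Suc m))"
    hence ij: "i < Suc m" "j < Suc m" by auto
    have "(diag1 W * dagger (diag1 W)) $$ (i,j) = (\<Sum>k<Suc m. diag1 W $$ (i,k) * cnj (diag1 W $$ (j,k)))"
      using ij D by (simp add: scalar_prod_def atLeast0LessThan)
    also have "\<dots> = diag1 W $$ (i,0) * cnj (diag1 W $$ (j,0)) + (\<Sum>k<m. diag1 W $$ (i,Suc k) * cnj (diag1 W $$ (j,Suc k)))"
      by (rule sum.lessThan_Suc_shift)
    also have "\<dots> = 1\<^sub>m (Suc m) $$ (i,j)"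
    proof (cases i)
      case 0 thus ?thesis using ij W by (cases j) (auto simp: diag1_def)
    next
      case (Suc i')
      show ?thesis
      proof (cases j)
        case 0 thus ?thesis using ij W Suc by (auto simp: diag1_def)
      next
        case (Suc j')
        thus ?thesis using ij W \<open>i = Suc i'\<close> e2[of i' j'] by (auto simp: diag1_def)
      qed
    qed
    finally show "(diag1 W * dagger (diag1 W)) $$ (i,j) = 1\<^sub>m (Suc m) $$ (i,j)" .
  qed (use D in auto)
  ultimately show ?thesis using D unfolding unit2_def by blast
qed

lemma mult_diag1_0:
  assumes "X \<in> carrier_mat n (Suc m)" "W \<in> carrier_mat m m" "a < n"
  shows "(X * diag1 W) $$ (a,0) = X $$ (a,0)"
proof -
  have "(X * diag1 W) $$ (a,0) = (\<Sum>k<Suc m. X $$ (a,k) * diag1 W $$ (k,0))"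
    using assms by (simp add: diag1_def scalar_prod_def atLeast0LessThan)
  also have "\<dots> = X $$ (a,0)" using assms by (simp del: sum.lessThan_Suc add: sum.lessThan_Suc_shift diag1_def)
  finally show ?thesis .
qed

lemma mult_diag1_Suc:
  assumes "X \<in> carrier_mat n (Suc m)" "W \<in> carrier_mat m m" "a < n" "e < m"
  shows "(X * diag1 W) $$ (a,Suc e) = (dropc X * W) $$ (a,e)"
proof -
  have "(X * diag1 W) $$ (a,Suc e) = (\<Sum>k<Suc m. X $$ (a,k) * diag1 W $$ (k,Suc e))"
    using assms by (simp add: diag1_def scalar_prod_def atLeast0LessThan)
  also have "\<dots> = (\<Sum>k<m. X $$ (a,Suc k) * W $$ (k, e))" using assms by (simp del: sum.lessThan_Suc add: sum.lessThan_Suc_shift diag1_def)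
  also have "\<dots> = (dropc X * W) $$ (a,e)" using assms by (simp add: dropc_def scalar_prod_def atLeast0LessThan)
  finally show ?thesis .
qed

lemma unit_gram:
  assumes "unit2 m V" "X \<in> carrier_mat n m"
  shows "(X * V) * dagger (X * V) = X * dagger X"
proof -
  have V: "V \<in> carrier_mat m m" and dV: "dagger V \<in> carrier_mat m m" and d2: "V * dagger V = 1\<^sub>m m"
    using assms unit2_def by auto
  have dX: "dagger X \<in> carrier_mat m n" using assms by auto
  have "(X * V) * dagger (X * V) = (X * V) * (dagger V * dagger X)" using V assms by (simp add: dagger_mult)
  also have "\<dots> = X * (V * (dagger V * dagger X))" using V dV dX assms by (meson assoc_mult_mat mult_carrier_mat)
  also have "\<dots> = X * ((V * dagger V) * dagger X)" using V dV dX assms by (metis assoc_mult_mat)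
  also have "\<dots> = X * dagger X" using d2 dX by (metis left_mult_one_mat)
  finally show ?thesis .
qed

lemma unit_cancel:
  assumes "unit2 m V" "Y \<in> carrier_mat n m"
  shows "(Y * V) * dagger V = Y"
proof -
  have V: "V \<in> carrier_mat m m" and dV: "dagger V \<in> carrier_mat m m" and d2: "V * dagger V = 1\<^sub>m m"
    using assms unit2_def by auto
  have "(Y * V) * dagger V = Y * (V * dagger V)" using V dV assms by (metis assoc_mult_mat)
  thus ?thesis using d2 assms by simp
qed

lemma vnorm_row_gram:
  assumes "X \<in> carrier_mat n m" "a < n"
  shows "complex_of_real ((vnorm (row X a))^2) = (X * dagger X) $$ (a,a)"
  using assms by (subst gram_entry[OF assms assms(2)]) (simp only: vnorm_sq cnj_mult_self of_real_sum, simp)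

lemma zero_gram_diag:
  assumes "X \<in> carrier_mat n m" "a < n" "(X * dagger X) $$ (a,a) = 0" "e < m"
  shows "X $$ (a,e) = 0"
proof -
  have "complex_of_real (\<Sum>e<m. (cmod (X $$ (a,e)))^2) = (\<Sum>e<m. X $$ (a,e) * cnj (X $$ (a,e)))"
    by (simp only: of_real_sum cnj_mult_self)
  also have "\<dots> = 0" using assms(3) unfolding gram_entry[OF assms(1,2,2)] .
  finally have "(\<Sum>e<m. (cmod (X $$ (a,e)))^2) = 0" by (simp only: of_real_eq_0_iff)
  hence "\<forall>e\<in>{..<m}. (cmod (X $$ (a,e)))^2 = 0" by (subst (asm) sum_nonneg_eq_0_iff) auto
  thus ?thesis using assms(4) by simp
qed



lemma row_mult_entry:
  assumes "X \<in> carrier_mat n m" "V \<in> carrier_mat m m" "a < n" "j < m"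
  shows "(\<Sum>i<m. row X a $ i * V $$ (i,j)) = (X * V) $$ (a,j)"
  using assms by (simp add: scalar_prod_def atLeast0LessThan)

lemma row_zero_iff:
  assumes "X \<in> carrier_mat n m" "a < n"
  shows "row X a = 0\<^sub>v m \<longleftrightarrow> (\<forall>e<m. X $$ (a,e) = 0)"
  using assms by (auto simp: vec_eq_iff)

lemma householder_row:
  assumes X: "X \<in> carrier_mat n m" and a: "a < n" and nz: "row X a \<noteq> 0\<^sub>v m"
  shows "\<exists>V. unit2 m V \<and> (\<forall>j<m. (X * V) $$ (a,j) = (if j = 0 then complex_of_real (vnorm (row X a)) else 0))"
proof -
  have "row X a \<in> carrier_vec m" using X by auto
  from householder[OF this nz] obtain V where V: "unit2 m V"
    and e: "\<forall>j<m. (\<Sum>i<m. row X a $ i * V $$ (i,j)) = (if j = 0 then complex_of_real (vnorm (row X a)) else 0)"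
    by blast
  have Vc: "V \<in> carrier_mat m m" using V unit2_def by auto
  show ?thesis using V e row_mult_entry[OF X Vc a] by auto
qed

lemma uhlmann_mat:
  "X \<in> carrier_mat n m \<Longrightarrow> Y \<in> carrier_mat n m \<Longrightarrow> X * dagger X = Y * dagger Y
   \<Longrightarrow> \<exists>W. unit2 m W \<and> X * W = Y"
proof (induction m arbitrary: n X Y)
  case 0
  have "X * 1\<^sub>m 0 = Y" using 0 by (intro eq_matI) auto
  thus ?case using unit2_one by blast
next
  case (Suc m)
  note X = Suc.prems(1) and Y = Suc.prems(2) and G = Suc.prems(3)
  show ?case
  proof (cases "\<forall>a<n. row X a = 0\<^sub>v (Suc m)")
    case True
    have "X * 1\<^sub>m (Suc m) = Y"
    proof (rule eq_matI)
      fix a e assume "a < dim_row Y" "e < dim_col Y"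
      hence ae: "a < n" "e < Suc m" using Y by auto
      have X0: "X $$ (a,e) = 0" if "e < Suc m" for e using True ae X row_zero_iff[OF X] that by auto
      have "(Y * dagger Y) $$ (a,a) = 0"
        unfolding G[symmetric] gram_entry[OF X ae(1) ae(1)] using X0 by simp
      hence "Y $$ (a,e) = 0" using zero_gram_diag[OF Y ae(1) _ ae(2)] by simp
      thus "(X * 1\<^sub>m (Suc m)) $$ (a,e) = Y $$ (a,e)" using X0 X ae by simp
    qed (use X Y in auto)
    thus ?thesis using unit2_one by blast
  next
    case False
    then obtain a where a: "a < n" and nzX: "row X a \<noteq> 0\<^sub>v (Suc m)" by blast
    have nv: "vnorm (row Y a) = vnorm (row X a)"
    proof -
      have "complex_of_real ((vnorm (row Y a))^2) = complex_of_real ((vnorm (row X a))^2)"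
        using vnorm_row_gram[OF X a] vnorm_row_gram[OF Y a] G by simp
      hence "(vnorm (row Y a))^2 = (vnorm (row X a))^2" by (simp only: of_real_eq_iff)
      moreover have "vnorm (row Y a) \<ge> 0" "vnorm (row X a) \<ge> 0" unfolding vnorm_def by (simp_all add: sum_nonneg)
      ultimately show ?thesis by (simp add: power2_eq_iff_nonneg)
    qed
    define r where "r = vnorm (row X a)"
    have "row X a \<in> carrier_vec (Suc m)" using X by (metis carrier_matD(2) row_carrier)
    hence rpos: "r > 0" using vnorm_pos[OF _ nzX] r_def by auto
    have nzY: "row Y a \<noteq> 0\<^sub>v (Suc m)"
    proof
      assume "row Y a = 0\<^sub>v (Suc m)"
      hence "vnorm (row Y a) = 0" by (simp add: vnorm_def)
      thus False using nv rpos r_def by simp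
    qed
    obtain V1 where V1: "unit2 (Suc m) V1" and V1e: "\<forall>j<Suc m. (X * V1) $$ (a,j) = (if j = 0 then complex_of_real r else 0)"
      using householder_row[OF X a nzX] r_def by blast
    obtain V2 where V2: "unit2 (Suc m) V2" and V2e: "\<forall>j<Suc m. (Y * V2) $$ (a,j) = (if j = 0 then complex_of_real r else 0)"
      using householder_row[OF Y a nzY] r_def nv by auto
    have V1c: "V1 \<in> carrier_mat (Suc m) (Suc m)" and V2c: "V2 \<in> carrier_mat (Suc m) (Suc m)"
      using V1 V2 unit2_def by auto
    define X' where "X' = X * V1"
    define Y' where "Y' = Y * V2"
    have X'c: "X' \<in> carrier_mat n (Suc m)" and Y'c: "Y' \<in> carrier_mat n (Suc m)"
      using X Y V1c V2c X'_def Y'_def by auto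
    have G': "X' * dagger X' = Y' * dagger Y'"
      unfolding X'_def Y'_def using unit_gram[OF V1 X] unit_gram[OF V2 Y] G by simp
    have col0: "X' $$ (b,0) = Y' $$ (b,0)" if b: "b < n" for b
    proof -
      have "(X' * dagger X') $$ (b,a) = (\<Sum>e<Suc m. X' $$ (b,e) * cnj (X' $$ (a,e)))"
        using gram_entry[OF X'c b a] .
      also have "\<dots> = X' $$ (b,0) * complex_of_real r"
        using V1e unfolding X'_def by (simp del: sum.lessThan_Suc add: sum.lessThan_Suc_shift)
      finally have 1: "(X' * dagger X') $$ (b,a) = X' $$ (b,0) * complex_of_real r" .
      have "(Y' * dagger Y') $$ (b,a) = (\<Sum>e<Suc m. Y' $$ (b,e) * cnj (Y' $$ (a,e)))"
        using gram_entry[OF Y'c b a] .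
      also have "\<dots> = Y' $$ (b,0) * complex_of_real r"
        using V2e unfolding Y'_def by (simp del: sum.lessThan_Suc add: sum.lessThan_Suc_shift)
      finally have 2: "(Y' * dagger Y') $$ (b,a) = Y' $$ (b,0) * complex_of_real r" .
      show ?thesis using 1 2 G' rpos by simp
    qed
    have dX: "dropc X' \<in> carrier_mat n m" and dY: "dropc Y' \<in> carrier_mat n m"
      using dropc_carrier X'c Y'c by auto
    have Gd: "dropc X' * dagger (dropc X') = dropc Y' * dagger (dropc Y')"
    proof (rule eq_matI)
      fix b c assume "b < dim_row (dropc Y' * dagger (dropc Y'))" "c < dim_col (dropc Y' * dagger (dropc Y'))"
      hence bc: "b < n" "c < n" using dY by auto
      have e: "(dropc Z * dagger (dropc Z)) $$ (b,c) = (Z * dagger Z) $$ (b,c) - Z $$ (b,0) * cnj (Z $$ (c,0))"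
        if Z: "Z \<in> carrier_mat n (Suc m)" for Z
      proof -
        have "(dropc Z * dagger (dropc Z)) $$ (b,c) = (\<Sum>e<m. dropc Z $$ (b,e) * cnj (dropc Z $$ (c,e)))"
          using gram_entry[OF dropc_carrier[OF Z] bc] .
        also have "\<dots> = (\<Sum>e<m. Z $$ (b,Suc e) * cnj (Z $$ (c,Suc e)))"
          using bc Z by (simp add: dropc_index)
        also have "\<dots> = (Z * dagger Z) $$ (b,c) - Z $$ (b,0) * cnj (Z $$ (c,0))"
          unfolding gram_entry[OF Z bc] by (simp del: sum.lessThan_Suc add: sum.lessThan_Suc_shift)
        finally show ?thesis .
      qed
      show "(dropc X' * dagger (dropc X')) $$ (b,c) = (dropc Y' * dagger (dropc Y')) $$ (b,c)"
        unfolding e[OF X'c] e[OF Y'c] using G' col0 bc by simp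
    qed (use dX dY in auto)
    from Suc.IH[OF dX dY Gd] obtain W where W: "unit2 m W" and XW: "dropc X' * W = dropc Y'" by blast
    have Wc: "W \<in> carrier_mat m m" using W unit2_def by auto
    have D: "X' * diag1 W = Y'"
    proof (rule eq_matI)
      fix b e assume "b < dim_row Y'" "e < dim_col Y'"
      hence be: "b < n" "e < Suc m" using Y'c by auto
      show "(X' * diag1 W) $$ (b,e) = Y' $$ (b,e)"
      proof (cases e)
        case 0 thus ?thesis using mult_diag1_0[OF X'c Wc be(1)] col0 be by simp
      next
        case (Suc e')
        hence e': "e' < m" using be by simp
        have "(X' * diag1 W) $$ (b,e) = (dropc X' * W) $$ (b,e')"
          using mult_diag1_Suc[OF X'c Wc be(1) e'] Suc by simp
        also have "\<dots> = dropc Y' $$ (b,e')" using XW by simp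
        also have "\<dots> = Y' $$ (b,e)" using dropc_index[OF Y'c be(1) e'] Suc by simp
        finally show ?thesis .
      qed
    qed (use X'c Y'c Wc diag1_carrier in auto)
    define U where "U = V1 * diag1 W * dagger V2"
    have U: "unit2 (Suc m) U" unfolding U_def
      by (intro unit2_mult unit2_dagger V1 V2 diag1_unit W)
    have DW: "diag1 W \<in> carrier_mat (Suc m) (Suc m)" using diag1_carrier[OF Wc] .
    have dV2: "dagger V2 \<in> carrier_mat (Suc m) (Suc m)" using V2c by auto
    have "X * U = ((X * V1) * diag1 W) * dagger V2"
      unfolding U_def using X V1c DW dV2 by (simp add: assoc_mult_mat[of _ n "Suc m" _ "Suc m"])
    also have "\<dots> = Y' * dagger V2" using D X'_def by simp
    also have "\<dots> = Y" unfolding Y'_def by (rule unit_cancel[OF V2 Y])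
    finally show ?thesis using U by blast
  qed
qed



definition nzr :: "complex mat \<Rightarrow> nat" where
  "nzr X = card {a. a < dim_row X \<and> (\<exists>e<dim_col X. X $$ (a,e) \<noteq> 0)}"

lemma nzr_le: "nzr X \<le> dim_row X"
proof -
  have "{a. a < dim_row X \<and> (\<exists>e<dim_col X. X $$ (a,e) \<noteq> 0)} \<subseteq> {..<dim_row X}" by auto
  from card_mono[OF finite_lessThan this] show ?thesis unfolding nzr_def by simp
qed

lemma lq_mat:
  "X \<in> carrier_mat n m \<Longrightarrow> \<exists>W. unit2 m W \<and> (\<forall>a<n. \<forall>e<m. nzr X \<le> e \<longrightarrow> (X * W) $$ (a,e) = 0)"
proof (induction m arbitrary: n X)
  case 0
  thus ?case using unit2_one by blast
next
  case (Suc m)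
  note X = Suc.prems(1)
  show ?case
  proof (cases "\<forall>a<n. row X a = 0\<^sub>v (Suc m)")
    case True
    have "\<forall>a<n. \<forall>e<Suc m. (X * 1\<^sub>m (Suc m)) $$ (a,e) = 0"
      using True X row_zero_iff[OF X] by auto
    thus ?thesis using unit2_one by blast
  next
    case False
    then obtain a where a: "a < n" and nzX: "row X a \<noteq> 0\<^sub>v (Suc m)" by blast
    obtain V1 where V1: "unit2 (Suc m) V1" and V1e: "\<forall>j<Suc m. (X * V1) $$ (a,j) = (if j = 0 then complex_of_real (vnorm (row X a)) else 0)"
      using householder_row[OF X a nzX] by blast
    have V1c: "V1 \<in> carrier_mat (Suc m) (Suc m)" using V1 unit2_def by auto
    define X' where "X' = X * V1"
    have X'c: "X' \<in> carrier_mat n (Suc m)" using X V1c X'_def by auto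
    have dX: "dropc X' \<in> carrier_mat n m" using dropc_carrier X'c by auto
    let ?S = "{a. a < n \<and> (\<exists>e<Suc m. X $$ (a,e) \<noteq> 0)}"
    let ?S' = "{b. b < n \<and> (\<exists>e<m. dropc X' $$ (b,e) \<noteq> 0)}"
    have aS: "a \<in> ?S" using nzX a row_zero_iff[OF X a] by auto
    have sub: "?S' \<subseteq> ?S - {a}"
    proof
      fix b assume b: "b \<in> ?S'"
      then obtain e where be: "b < n" "e < m" "dropc X' $$ (b,e) \<noteq> 0" by auto
      hence ne: "X' $$ (b, Suc e) \<noteq> 0" using dropc_index[OF X'c] by simp
      have "b \<noteq> a" using ne V1e be X'_def by auto
      moreover have "b \<in> ?S"
      proof (rule ccontr)
        assume "b \<notin> ?S"
        hence z: "\<forall>k<Suc m. X $$ (b,k) = 0" using be by auto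
        have "X' $$ (b, Suc e) = (\<Sum>k<Suc m. X $$ (b,k) * V1 $$ (k, Suc e))"
          unfolding X'_def using X V1c be by (simp add: scalar_prod_def atLeast0LessThan)
        also have "\<dots> = 0" using z by simp
        finally show False using ne by simp
      qed
      ultimately show "b \<in> ?S - {a}" by blast
    qed
    have fin: "finite ?S" by simp
    have card: "nzr (dropc X') \<le> nzr X - 1"
    proof -
      have "nzr (dropc X') = card ?S'" unfolding nzr_def using dX by simp
      also have "\<dots> \<le> card (?S - {a})" using sub by (intro card_mono) auto
      also have "\<dots> = card ?S - 1" using aS by simp
      also have "card ?S = nzr X" unfolding nzr_def using X by simp
      finally show ?thesis .
    qed
    have pos: "nzr X \<ge> 1"
    proof -
      have "card ?S > 0" using aS fin card_gt_0_iff by blast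
      thus ?thesis unfolding nzr_def using X by simp
    qed
    from Suc.IH[OF dX] obtain W where W: "unit2 m W"
      and We: "\<forall>b<n. \<forall>e<m. nzr (dropc X') \<le> e \<longrightarrow> (dropc X' * W) $$ (b,e) = 0" by blast
    have Wc: "W \<in> carrier_mat m m" using W unit2_def by auto
    have DW: "diag1 W \<in> carrier_mat (Suc m) (Suc m)" using diag1_carrier[OF Wc] .
    define U where "U = V1 * diag1 W"
    have U: "unit2 (Suc m) U" unfolding U_def by (intro unit2_mult V1 diag1_unit W)
    have XU: "X * U = X' * diag1 W" unfolding U_def X'_def using X V1c DW by (simp add: assoc_mult_mat)
    have "\<forall>b<n. \<forall>e<Suc m. nzr X \<le> e \<longrightarrow> (X * U) $$ (b,e) = 0"
    proof (intro allI impI)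
      fix b e assume b: "b < n" and e: "e < Suc m" and le: "nzr X \<le> e"
      then obtain e' where e': "e = Suc e'" using pos by (cases e) auto
      have "(X * U) $$ (b,e) = (dropc X' * W) $$ (b,e')"
        unfolding XU e' using mult_diag1_Suc[OF X'c Wc b] e e' by simp
      also have "\<dots> = 0" using We b e e' le card by auto
      finally show "(X * U) $$ (b,e) = 0" .
    qed
    thus ?thesis using U by blast
  qed
qed

lemma compress_mat:
  assumes X: "X \<in> carrier_mat n m" and k: "n \<le> k"
  shows "\<exists>Y. Y \<in> carrier_mat n k \<and> Y * dagger Y = X * dagger X"
proof -
  obtain W where W: "unit2 m W" and We: "\<forall>a<n. \<forall>e<m. nzr X \<le> e \<longrightarrow> (X * W) $$ (a,e) = 0"
    using lq_mat[OF X] by blast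
  have Wc: "W \<in> carrier_mat m m" using W unit2_def by auto
  define Z where "Z = X * W"
  have Zc: "Z \<in> carrier_mat n m" using X Wc Z_def by auto
  have Z0: "Z $$ (a,e) = 0" if "a < n" "e < m" "n \<le> e" for a e
    using We that nzr_le[of X] X Z_def by auto
  define Y where "Y = mat n k (\<lambda>(a,e). if e < m then Z $$ (a,e) else 0)"
  have Yc: "Y \<in> carrier_mat n k" by (simp add: Y_def)
  have "Y * dagger Y = Z * dagger Z"
  proof (rule eq_matI)
    fix a b assume "a < dim_row (Z * dagger Z)" "b < dim_col (Z * dagger Z)"
    hence ab: "a < n" "b < n" using Zc by auto
    define p where "p = min m k"
    have "(Y * dagger Y) $$ (a,b) = (\<Sum>e<k. Y $$ (a,e) * cnj (Y $$ (b,e)))" using gram_entry[OF Yc ab] .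
    also have "\<dots> = (\<Sum>e<p. Y $$ (a,e) * cnj (Y $$ (b,e)))"
      by (rule sum.mono_neutral_right) (use ab in \<open>auto simp: p_def Y_def\<close>)
    also have "\<dots> = (\<Sum>e<p. Z $$ (a,e) * cnj (Z $$ (b,e)))"
      by (rule sum.cong) (use ab in \<open>auto simp: p_def Y_def\<close>)
    also have "\<dots> = (\<Sum>e<m. Z $$ (a,e) * cnj (Z $$ (b,e)))"
      by (rule sum.mono_neutral_left) (use Z0 ab k in \<open>auto simp: p_def\<close>)
    also have "\<dots> = (Z * dagger Z) $$ (a,b)" using gram_entry[OF Zc ab] by simp
    finally show "(Y * dagger Y) $$ (a,b) = (Z * dagger Z) $$ (a,b)" .
  qed (use Yc Zc in auto)
  also have "\<dots> = X * dagger X" unfolding Z_def by (rule unit_gram[OF W X])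
  finally show ?thesis using Yc by blast
qed



definition matof :: "nat \<Rightarrow> nat \<Rightarrow> complex vec \<Rightarrow> complex mat" where
  "matof n k x = mat n k (\<lambda>(a,e). x $ (a*k+e))"

definition vecof :: "nat \<Rightarrow> nat \<Rightarrow> complex mat \<Rightarrow> complex vec" where
  "vecof n k X = vec (n*k) (\<lambda>i. X $$ (i div k, i mod k))"

lemma matof_carrier[simp]: "matof n k x \<in> carrier_mat n k" by (simp add: matof_def)
lemma vecof_carrier[simp]: "vecof n k X \<in> carrier_vec (n*k)" by (simp add: vecof_def)

lemma divmod_lt: "(a::nat) < n \<Longrightarrow> e < k \<Longrightarrow> a*k+e < n*k"
proof -
  assume "a < n" "e < k"
  hence "a*k + e < a*k + k" by simp
  also have "\<dots> = Suc a * k" by simp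
  also have "\<dots> \<le> n*k" using \<open>a < n\<close> by (intro mult_right_mono) auto
  finally show ?thesis .
qed

lemma matof_vecof: "X \<in> carrier_mat n k \<Longrightarrow> matof n k (vecof n k X) = X"
  by (rule eq_matI) (auto simp: matof_def vecof_def divmod_lt)

lemma ptrace_ket_bra:
  assumes "x \<in> carrier_vec (n*k)"
  shows "ptrace2 n k (ket_bra x) = matof n k x * dagger (matof n k x)"
proof (rule eq_matI)
  fix i j assume "i < dim_row (matof n k x * dagger (matof n k x))" "j < dim_col (matof n k x * dagger (matof n k x))"
  hence ij: "i < n" "j < n" by (auto simp: matof_def)
  have "(matof n k x * dagger (matof n k x)) $$ (i,j) = (\<Sum>e<k. x $ (i*k+e) * cnj (x $ (j*k+e)))"
    using gram_entry[OF matof_carrier ij] ij by (simp add: matof_def)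
  moreover have "ptrace2 n k (ket_bra x) $$ (i,j) = (\<Sum>e<k. x $ (i*k+e) * cnj (x $ (j*k+e)))"
    using ij assms by (simp add: ptrace2_def ket_bra_def divmod_lt)
  ultimately show "ptrace2 n k (ket_bra x) $$ (i,j) = (matof n k x * dagger (matof n k x)) $$ (i,j)" by simp
qed (auto simp: ptrace2_def matof_def)

lemma kron_vec_index:
  assumes "i < dim_vec x * dim_vec y"
  shows "kron_vec x y $ i = x $ (i div dim_vec y) * y $ (i mod dim_vec y)"
  using assms by (simp add: kron_vec_def)

lemma dim_kron_vec[simp]: "dim_vec (kron_vec x y) = dim_vec x * dim_vec y"
  by (simp add: kron_vec_def)

lemma dim_kron_mat[simp]: "dim_row (kron_mat A B) = dim_row A * dim_row B" "dim_col (kron_mat A B) = dim_col A * dim_col B"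
  by (simp_all add: kron_mat_def)

lemma idx_div[simp]: "(e::nat) < k \<Longrightarrow> (a*k+e) div k = a" by simp
lemma idx_mod[simp]: "(e::nat) < k \<Longrightarrow> (a*k+e) mod k = e" by simp

lemma kron_id_left_apply:
  assumes U: "U \<in> carrier_mat k k" and x: "x \<in> carrier_vec (n*k)"
  shows "kron_mat (1\<^sub>m n) U *\<^sub>v x = vecof n k (matof n k x * transpose_mat U)"
proof (rule eq_vecI)
  fix i assume "i < dim_vec (vecof n k (matof n k x * transpose_mat U))"
  hence i: "i < n*k" by (simp add: vecof_def)
  define a where "a = i div k"
  define e where "e = i mod k"
  have kpos: "k > 0" using i by (cases k) auto
  have a: "a < n" using i a_def by (simp add: less_mult_imp_div_less)
  have e: "e < k" using kpos e_def by simp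
  have ii: "i = a*k+e" using a_def e_def by simp
  have "(kron_mat (1\<^sub>m n) U *\<^sub>v x) $ i = (\<Sum>j<n*k. kron_mat (1\<^sub>m n) U $$ (i,j) * x $ j)"
    using i x U by (simp add: scalar_prod_def atLeast0LessThan kron_mat_def)
  also have "\<dots> = (\<Sum>a'<n. \<Sum>f<k. kron_mat (1\<^sub>m n) U $$ (i,a'*k+f) * x $ (a'*k+f))"
    by (rule sum_prod_split)
  also have "\<dots> = (\<Sum>a'<n. if a' = a then (\<Sum>f<k. U $$ (e,f) * x $ (a'*k+f)) else 0)"
    by (intro sum.cong refl) (use i U a e in \<open>auto simp: kron_mat_def ii divmod_lt\<close>)
  also have "\<dots> = (\<Sum>f<k. U $$ (e,f) * x $ (a*k+f))"
    using a by simp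
  also have "\<dots> = (matof n k x * transpose_mat U) $$ (a,e)"
    using a e U by (simp add: matof_def scalar_prod_def atLeast0LessThan mult.commute)
  also have "\<dots> = vecof n k (matof n k x * transpose_mat U) $ i"
    using i by (simp add: vecof_def a_def e_def)
  finally show "(kron_mat (1\<^sub>m n) U *\<^sub>v x) $ i = vecof n k (matof n k x * transpose_mat U) $ i" .
qed (use U in \<open>auto simp: kron_mat_def vecof_def\<close>)

lemma vecof_matof: "x \<in> carrier_vec (n*k) \<Longrightarrow> vecof n k (matof n k x) = x"
proof (rule eq_vecI)
  fix i assume x: "x \<in> carrier_vec (n*k)" and "i < dim_vec x"
  hence i: "i < n*k" by simp
  have kpos: "k > 0" using i by (cases k) auto
  have "i div k < n" using i by (simp add: less_mult_imp_div_less)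
  thus "vecof n k (matof n k x) $ i = x $ i" using i kpos by (simp add: vecof_def matof_def)
qed auto

lemma unitary_transpose:
  assumes "unit2 k W" shows "unitary k (transpose_mat W)"
proof -
  have W: "W \<in> carrier_mat k k" and d2: "W * dagger W = 1\<^sub>m k" using assms unit2_def by auto
  have "dagger (transpose_mat W) * transpose_mat W = 1\<^sub>m k"
  proof (rule eq_matI)
    fix i j assume "i < dim_row (1\<^sub>m k)" "j < dim_col (1\<^sub>m k)"
    hence ij: "i < k" "j < k" by auto
    have "(dagger (transpose_mat W) * transpose_mat W) $$ (i,j) = cnj ((W * dagger W) $$ (i,j))"
      using ij W by (simp add: scalar_prod_def dagger_def cnj_sum mult.commute)
    thus "(dagger (transpose_mat W) * transpose_mat W) $$ (i,j) = 1\<^sub>m k $$ (i,j)" using d2 ij by simp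
  qed (use W in \<open>auto simp: dagger_def\<close>)
  thus ?thesis using W unfolding unitary_def by auto
qed

lemma uhlmann_vec:
  assumes x: "x \<in> carrier_vec (n*k)" and y: "y \<in> carrier_vec (n*k)"
    and eq: "ptrace2 n k (ket_bra x) = ptrace2 n k (ket_bra y)"
  shows "\<exists>U. unitary k U \<and> kron_mat (1\<^sub>m n) U *\<^sub>v x = y"
proof -
  have "matof n k x * dagger (matof n k x) = matof n k y * dagger (matof n k y)"
    using eq ptrace_ket_bra[OF x] ptrace_ket_bra[OF y] by simp
  from uhlmann_mat[OF matof_carrier matof_carrier this] obtain W where
    W: "unit2 k W" and XW: "matof n k x * W = matof n k y" by blast
  have Wc: "W \<in> carrier_mat k k" using W unit2_def by auto
  have "kron_mat (1\<^sub>m n) (transpose_mat W) *\<^sub>v x = vecof n k (matof n k x * transpose_mat (transpose_mat W))"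
    using kron_id_left_apply[OF _ x] Wc by simp
  also have "\<dots> = y" using XW vecof_matof[OF y] by simp
  finally show ?thesis using unitary_transpose[OF W] by blast
qed



lemma sum_split_add:
  fixes f :: "nat \<Rightarrow> 'a::comm_monoid_add"
  shows "(\<Sum>q<m1+m2. f q) = (\<Sum>q<m1. f q) + (\<Sum>q<m2. f (m1+q))"
  by (induction m2) (simp_all add: add.assoc)

definition isgram :: "nat \<Rightarrow> complex mat \<Rightarrow> bool" where
  "isgram n M \<longleftrightarrow> (\<exists>m Z. Z \<in> carrier_mat n m \<and> M = Z * dagger Z)"

lemma isgram_carrier: "isgram n M \<Longrightarrow> M \<in> carrier_mat n n"
  unfolding isgram_def by auto

lemma isgram_ptrace: "x \<in> carrier_vec (n*k) \<Longrightarrow> isgram n (ptrace2 n k (ket_bra x))"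
  unfolding isgram_def using ptrace_ket_bra matof_carrier by blast

lemma isgram_add:
  assumes "isgram n A" "isgram n B" shows "isgram n (A + B)"
proof -
  obtain m1 Z1 where Z1: "Z1 \<in> carrier_mat n m1" "A = Z1 * dagger Z1" using assms(1) isgram_def by auto
  obtain m2 Z2 where Z2: "Z2 \<in> carrier_mat n m2" "B = Z2 * dagger Z2" using assms(2) isgram_def by auto
  define Z where "Z = mat n (m1+m2) (\<lambda>(a,q). if q < m1 then Z1 $$ (a,q) else Z2 $$ (a,q-m1))"
  have Zc: "Z \<in> carrier_mat n (m1+m2)" by (simp add: Z_def)
  have "A + B = Z * dagger Z"
  proof (rule eq_matI)
    fix a b assume "a < dim_row (Z * dagger Z)" "b < dim_col (Z * dagger Z)"
    hence ab: "a < n" "b < n" using Zc by auto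
    have "(Z * dagger Z) $$ (a,b) = (\<Sum>q<m1+m2. Z $$ (a,q) * cnj (Z $$ (b,q)))" using gram_entry[OF Zc ab] .
    also have "\<dots> = (\<Sum>q<m1. Z $$ (a,q) * cnj (Z $$ (b,q))) + (\<Sum>q<m2. Z $$ (a,m1+q) * cnj (Z $$ (b,m1+q)))"
      by (rule sum_split_add)
    also have "\<dots> = (\<Sum>q<m1. Z1 $$ (a,q) * cnj (Z1 $$ (b,q))) + (\<Sum>q<m2. Z2 $$ (a,q) * cnj (Z2 $$ (b,q)))"
      using ab by (simp add: Z_def)
    also have "\<dots> = (A + B) $$ (a,b)" using ab Z1 Z2 by (simp add: scalar_prod_def atLeast0LessThan dagger_def)
    finally show "(A + B) $$ (a,b) = (Z * dagger Z) $$ (a,b)" by simp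
  qed (use Z1 Z2 Zc in auto)
  thus ?thesis unfolding isgram_def using Zc by blast
qed

lemma isgram_smult:
  assumes "isgram n A" "r \<ge> 0" shows "isgram n (complex_of_real r \<cdot>\<^sub>m A)"
proof -
  obtain m Z where Z: "Z \<in> carrier_mat n m" "A = Z * dagger Z" using assms(1) isgram_def by auto
  define Z' where "Z' = complex_of_real (sqrt r) \<cdot>\<^sub>m Z"
  have Zc: "Z' \<in> carrier_mat n m" using Z by (simp add: Z'_def)
  have "complex_of_real r \<cdot>\<^sub>m A = Z' * dagger Z'"
  proof (rule eq_matI)
    fix a b assume "a < dim_row (Z' * dagger Z')" "b < dim_col (Z' * dagger Z')"
    hence ab: "a < n" "b < n" using Zc by auto
    have "(Z' * dagger Z') $$ (a,b) = (\<Sum>q<m. Z' $$ (a,q) * cnj (Z' $$ (b,q)))" using gram_entry[OF Zc ab] .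
    also have "\<dots> = (\<Sum>q<m. complex_of_real r * (Z $$ (a,q) * cnj (Z $$ (b,q))))"
    proof (rule sum.cong[OF refl])
      fix q assume "q \<in> {..<m}"
      have "complex_of_real (sqrt r) * complex_of_real (sqrt r) = complex_of_real r"
        using assms(2) by (simp flip: of_real_mult)
      thus "Z' $$ (a,q) * cnj (Z' $$ (b,q)) = complex_of_real r * (Z $$ (a,q) * cnj (Z $$ (b,q)))"
        using ab Z \<open>q \<in> {..<m}\<close> by (simp add: Z'_def algebra_simps)
    qed
    also have "\<dots> = (complex_of_real r \<cdot>\<^sub>m A) $$ (a,b)"
      using ab Z by (simp add: scalar_prod_def atLeast0LessThan dagger_def sum_distrib_left)
    finally show "(complex_of_real r \<cdot>\<^sub>m A) $$ (a,b) = (Z' * dagger Z') $$ (a,b)" by simp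
  qed (use Z Zc in auto)
  thus ?thesis unfolding isgram_def using Zc by blast
qed

lemma kron_mat_index:
  assumes "i < dim_row A * dim_row B" "j < dim_col A * dim_col B"
  shows "kron_mat A B $$ (i,j) = A $$ (i div dim_row B, j div dim_col B) * B $$ (i mod dim_row B, j mod dim_col B)"
  using assms by (simp add: kron_mat_def)

lemma ket_bra_dims[simp]: "dim_row (ket_bra x) = dim_vec x" "dim_col (ket_bra x) = dim_vec x"
  by (simp_all add: ket_bra_def)

lemma ket_bra_index[simp]: "i < dim_vec x \<Longrightarrow> j < dim_vec x \<Longrightarrow> ket_bra x $$ (i,j) = x $ i * cnj (x $ j)"
  by (simp add: ket_bra_def)

lemma isgram_kron:
  assumes "isgram n A" "idle \<in> carrier_vec d"
  shows "isgram (n*d) (kron_mat A (ket_bra idle))"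
proof -
  obtain m Z where Z: "Z \<in> carrier_mat n m" "A = Z * dagger Z" using assms(1) isgram_def by auto
  have dpos: "d > 0" if "p < n*d" for p using that by (cases d) auto
  define Z' where "Z' = mat (n*d) m (\<lambda>(p,q). Z $$ (p div d, q) * idle $ (p mod d))"
  have Zc: "Z' \<in> carrier_mat (n*d) m" by (simp add: Z'_def)
  have "kron_mat A (ket_bra idle) = Z' * dagger Z'"
  proof (rule eq_matI)
    fix p p' assume "p < dim_row (Z' * dagger Z')" "p' < dim_col (Z' * dagger Z')"
    hence pp: "p < n*d" "p' < n*d" using Zc by auto
    have dv: "p div d < n" "p' div d < n" using pp by (simp_all add: less_mult_imp_div_less)
    have md: "p mod d < d" "p' mod d < d" using pp dpos by auto
    have "(Z' * dagger Z') $$ (p,p') = (\<Sum>q<m. Z' $$ (p,q) * cnj (Z' $$ (p',q)))" using gram_entry[OF Zc pp] .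
    also have "\<dots> = (\<Sum>q<m. Z $$ (p div d,q) * cnj (Z $$ (p' div d,q))) * (idle $ (p mod d) * cnj (idle $ (p' mod d)))"
      unfolding sum_distrib_right using pp by (intro sum.cong refl) (simp add: Z'_def algebra_simps)
    also have "\<dots> = kron_mat A (ket_bra idle) $$ (p,p')"
      using Z pp dv md assms(2) by (simp add: kron_mat_index scalar_prod_def atLeast0LessThan dagger_def)
    finally show "kron_mat A (ket_bra idle) $$ (p,p') = (Z' * dagger Z') $$ (p,p')" by simp
  qed (use Z Zc assms(2) in auto)
  thus ?thesis unfolding isgram_def using Zc by blast
qed

lemma isgram_psd:
  assumes "isgram n M" shows "psd n M"
proof -
  obtain m Z where Z: "Z \<in> carrier_mat n m" "M = Z * dagger Z" using assms isgram_def by auto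
  have Mc: "M \<in> carrier_mat n n" using Z by auto
  have "Im z = 0 \<and> Re z \<ge> 0" if v: "v \<in> carrier_vec n" and zd: "z = (\<Sum>i<n. cnj (v $ i) * (M *\<^sub>v v) $ i)" for v z
  proof -
    define w where "w = (\<lambda>q. \<Sum>j<n. cnj (Z $$ (j,q)) * v $ j)"
    have "z = (\<Sum>i<n. cnj (v $ i) * (\<Sum>j<n. (\<Sum>q<m. Z $$ (i,q) * cnj (Z $$ (j,q))) * v $ j))"
      unfolding zd using Z v by (intro sum.cong refl) (simp add: scalar_prod_def atLeast0LessThan dagger_def)
    also have "\<dots> = (\<Sum>i<n. \<Sum>q<m. \<Sum>j<n. cnj (v $ i) * Z $$ (i,q) * cnj (Z $$ (j,q)) * v $ j)"
      by (simp add: sum_distrib_left sum_distrib_right algebra_simps) (rule sum.cong[OF refl], rule sum.swap)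
    also have "\<dots> = (\<Sum>q<m. \<Sum>i<n. \<Sum>j<n. cnj (v $ i) * Z $$ (i,q) * cnj (Z $$ (j,q)) * v $ j)"
      by (rule sum.swap)
    also have "\<dots> = (\<Sum>q<m. cnj (w q) * w q)"
      unfolding w_def cnj_sum sum_distrib_right
      unfolding sum_distrib_left
      by (intro sum.cong refl) (simp add: algebra_simps)
    also have "\<dots> = complex_of_real (\<Sum>q<m. (cmod (w q))^2)"
      by (simp only: of_real_sum cnj_mult_self[symmetric] mult.commute)
    finally show ?thesis by (simp add: sum_nonneg)
  qed
  thus ?thesis unfolding psd_def Let_def using Mc by blast
qed

lemma isgram_purify:
  assumes "isgram n M" "n \<le> k"
  shows "\<exists>\<psi>. \<psi> \<in> carrier_vec (n*k) \<and> ptrace2 n k (ket_bra \<psi>) = M"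
proof -
  obtain m Z where Z: "Z \<in> carrier_mat n m" "M = Z * dagger Z" using assms isgram_def by auto
  obtain Y where Y: "Y \<in> carrier_mat n k" "Y * dagger Y = Z * dagger Z" using compress_mat[OF Z(1) assms(2)] by blast
  have "ptrace2 n k (ket_bra (vecof n k Y)) = M"
    using ptrace_ket_bra[OF vecof_carrier] matof_vecof[OF Y(1)] Y Z by simp
  thus ?thesis using vecof_carrier by blast
qed



lemma ptrace2_dims[simp]: "dim_row (ptrace2 n k M) = n" "dim_col (ptrace2 n k M) = n"
  by (simp_all add: ptrace2_def)

lemma ptrace2_index: "i < n \<Longrightarrow> j < n \<Longrightarrow> ptrace2 n k M $$ (i,j) = (\<Sum>c<k. M $$ (i*k+c, j*k+c))"
  by (simp add: ptrace2_def)

lemma ptrace_comp: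
  "ptrace2 dA (dB*dC) M = ptrace2 dA dB (ptrace2 (dA*dB) dC M)"
proof (rule eq_matI)
  fix i j assume "i < dim_row (ptrace2 dA dB (ptrace2 (dA*dB) dC M))" "j < dim_col (ptrace2 dA dB (ptrace2 (dA*dB) dC M))"
  hence ij: "i < dA" "j < dA" by auto
  have "ptrace2 dA (dB*dC) M $$ (i,j) = (\<Sum>b<dB. \<Sum>c<dC. M $$ (i*(dB*dC)+(b*dC+c), j*(dB*dC)+(b*dC+c)))"
    using ij by (simp add: ptrace2_index sum_prod_split)
  also have "\<dots> = (\<Sum>b<dB. \<Sum>c<dC. M $$ ((i*dB+b)*dC+c, (j*dB+b)*dC+c))"
    by (simp add: algebra_simps)
  also have "\<dots> = ptrace2 dA dB (ptrace2 (dA*dB) dC M) $$ (i,j)"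
    using ij by (simp add: ptrace2_index divmod_lt)
  finally show "ptrace2 dA (dB*dC) M $$ (i,j) = ptrace2 dA dB (ptrace2 (dA*dB) dC M) $$ (i,j)" .
qed auto

lemma kron_L_apply:
  assumes L: "L \<in> carrier_mat N N" and x: "x \<in> carrier_vec (N*k)"
  shows "kron_mat L (1\<^sub>m k) *\<^sub>v x = vecof N k (L * matof N k x)"
proof (rule eq_vecI)
  fix i assume "i < dim_vec (vecof N k (L * matof N k x))"
  hence i: "i < N*k" by (simp add: vecof_def)
  define p where "p = i div k"
  define c where "c = i mod k"
  have kpos: "k > 0" using i by (cases k) auto
  have p: "p < N" using i p_def by (simp add: less_mult_imp_div_less)
  have c: "c < k" using kpos c_def by simp
  have ii: "i = p*k+c" using p_def c_def by simp
  have "(kron_mat L (1\<^sub>m k) *\<^sub>v x) $ i = (\<Sum>j<N*k. kron_mat L (1\<^sub>m k) $$ (i,j) * x $ j)"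
    using i x L by (simp add: scalar_prod_def atLeast0LessThan kron_mat_def)
  also have "\<dots> = (\<Sum>p'<N. \<Sum>f<k. kron_mat L (1\<^sub>m k) $$ (i,p'*k+f) * x $ (p'*k+f))"
    by (rule sum_prod_split)
  also have "\<dots> = (\<Sum>p'<N. \<Sum>f<k. if f = c then L $$ (p,p') * x $ (p'*k+f) else 0)"
    by (intro sum.cong refl) (use i L p c in \<open>auto simp: kron_mat_def ii divmod_lt\<close>)
  also have "\<dots> = (\<Sum>p'<N. L $$ (p,p') * x $ (p'*k+c))"
    using c by simp
  also have "\<dots> = (L * matof N k x) $$ (p,c)"
    using p c L by (simp add: matof_def scalar_prod_def atLeast0LessThan)
  also have "\<dots> = vecof N k (L * matof N k x) $ i"
    using i by (simp add: vecof_def p_def c_def)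
  finally show "(kron_mat L (1\<^sub>m k) *\<^sub>v x) $ i = vecof N k (L * matof N k x) $ i" .
qed (use L in \<open>auto simp: kron_mat_def vecof_def\<close>)

lemma sandwich_ptrace:
  assumes L: "L \<in> carrier_mat N N" and x: "x \<in> carrier_vec (N*k)"
  shows "ptrace2 N k (ket_bra (kron_mat L (1\<^sub>m k) *\<^sub>v x)) = L * ptrace2 N k (ket_bra x) * dagger L"
proof -
  have X: "matof N k x \<in> carrier_mat N k" by simp
  have LX: "L * matof N k x \<in> carrier_mat N k" using L by simp
  have dX: "dagger (matof N k x) \<in> carrier_mat k N" by simp
  have dL: "dagger L \<in> carrier_mat N N" using L by simp
  have "ptrace2 N k (ket_bra (kron_mat L (1\<^sub>m k) *\<^sub>v x)) = (L * matof N k x) * dagger (L * matof N k x)"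
    unfolding kron_L_apply[OF L x] ptrace_ket_bra[OF vecof_carrier] matof_vecof[OF LX] ..
  also have "\<dots> = (L * matof N k x) * (dagger (matof N k x) * dagger L)"
    using dagger_mult[OF L X] by simp
  also have "\<dots> = L * (matof N k x * dagger (matof N k x)) * dagger L"
  proof -
    have "(L * matof N k x) * (dagger (matof N k x) * dagger L) = L * (matof N k x * (dagger (matof N k x) * dagger L))"
      using L X dX dL by (meson assoc_mult_mat mult_carrier_mat)
    also have "\<dots> = L * ((matof N k x * dagger (matof N k x)) * dagger L)"
      using L X dX dL by (metis assoc_mult_mat)
    also have "\<dots> = L * (matof N k x * dagger (matof N k x)) * dagger L"
      using L X dX dL by (metis assoc_mult_mat mult_carrier_mat)
    finally show ?thesis .
  qed
  also have "\<dots> = L * ptrace2 N k (ket_bra x) * dagger L" using ptrace_ket_bra[OF x] by simp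
  finally show ?thesis .
qed

lemma qubit_ptrace:
  assumes p: "p \<in> carrier_vec (n*K)" and q: "q \<in> carrier_vec (n*K)" and ij: "i < n" "j < n"
  shows "ptrace2 n (K*2) (ket_bra (kron_vec p (vec 2 (\<lambda>i. if i = 0 then 1 else 0)) + s \<cdot>\<^sub>v kron_vec q (vec 2 (\<lambda>i. if i = 1 then 1 else 0)))) $$ (i,j)
    = ptrace2 n K (ket_bra p) $$ (i,j) + (s * cnj s) * ptrace2 n K (ket_bra q) $$ (i,j)"
proof -
  let ?x = "kron_vec p (vec 2 (\<lambda>i. if i = 0 then 1 else 0)) + s \<cdot>\<^sub>v kron_vec q (vec 2 (\<lambda>i. if i = 1 then 1 else 0))"
  have dx: "dim_vec ?x = n*(K*2)" using p q by simp
  have xe: "?x $ ((a*K+k')*2 + r) = (if r = 0 then p $ (a*K+k') else s * q $ (a*K+k'))"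
    if "a < n" "k' < K" "r < 2" for a k' r
  proof -
    define t where "t = (a*K+k')*2 + r"
    have lt: "t < n*K*2" unfolding t_def using divmod_lt[OF divmod_lt[OF that(1,2)] that(3)] .
    have d: "t div 2 = a*K+k'" and m: "t mod 2 = r" unfolding t_def using that(3) idx_mod[of r 2 "a*K+k'"] by simp_all
    have "?x $ t = p $ (t div 2) * vec 2 (\<lambda>i. if i = 0 then 1 else 0) $ (t mod 2) + s * (q $ (t div 2) * vec 2 (\<lambda>i. if i = 1 then 1 else 0) $ (t mod 2))"
      using lt p q by (simp add: kron_vec_def)
    also have "\<dots> = (if r = 0 then p $ (a*K+k') else s * q $ (a*K+k'))"
      unfolding d m using that(3) by auto
    finally show ?thesis unfolding t_def .
  qed
  have "ptrace2 n (K*2) (ket_bra ?x) $$ (i,j) = (\<Sum>c<K*2. ?x $ (i*(K*2)+c) * cnj (?x $ (j*(K*2)+c)))"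
    unfolding ptrace2_index[OF ij]
  proof (intro sum.cong refl)
    fix c assume "c \<in> {..<K*2}"
    hence "i*(K*2)+c < dim_vec ?x" "j*(K*2)+c < dim_vec ?x" unfolding dx using ij divmod_lt by auto
    thus "ket_bra ?x $$ (i*(K*2)+c, j*(K*2)+c) = ?x $ (i*(K*2)+c) * cnj (?x $ (j*(K*2)+c))"
      by (rule ket_bra_index)
  qed
  also have "\<dots> = (\<Sum>k'<K. \<Sum>r<2. ?x $ ((i*K+k')*2+r) * cnj (?x $ ((j*K+k')*2+r)))"
    unfolding sum_prod_split by (simp add: algebra_simps)
  also have "\<dots> = (\<Sum>k'<K. p $ (i*K+k') * cnj (p $ (j*K+k')) + (s * cnj s) * (q $ (i*K+k') * cnj (q $ (j*K+k'))))"
  proof (intro sum.cong refl)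
    fix k' assume "k' \<in> {..<K}"
    hence k': "k' < K" by simp
    have "(\<Sum>r<2. ?x $ ((i*K+k')*2+r) * cnj (?x $ ((j*K+k')*2+r)))
        = (\<Sum>r<(2::nat). (if r = 0 then p $ (i*K+k') else s * q $ (i*K+k')) * cnj (if r = 0 then p $ (j*K+k') else s * q $ (j*K+k')))"
    proof (rule sum.cong[OF refl])
      fix r assume "r \<in> {..<2::nat}"
      hence r: "r < 2" by simp
      show "?x $ ((i*K+k')*2+r) * cnj (?x $ ((j*K+k')*2+r))
        = (if r = 0 then p $ (i*K+k') else s * q $ (i*K+k')) * cnj (if r = 0 then p $ (j*K+k') else s * q $ (j*K+k'))"
        unfolding xe[OF ij(1) k' r] xe[OF ij(2) k' r] ..
    qed
    also have "\<dots> = p $ (i*K+k') * cnj (p $ (j*K+k')) + (s * cnj s) * (q $ (i*K+k') * cnj (q $ (j*K+k')))"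
      by (simp add: numeral_2_eq_2 algebra_simps)
    finally show "(\<Sum>r<2. ?x $ ((i*K+k')*2+r) * cnj (?x $ ((j*K+k')*2+r)))
        = p $ (i*K+k') * cnj (p $ (j*K+k')) + (s * cnj s) * (q $ (i*K+k') * cnj (q $ (j*K+k')))" .
  qed
  also have "\<dots> = ptrace2 n K (ket_bra p) $$ (i,j) + (s * cnj s) * ptrace2 n K (ket_bra q) $$ (i,j)"
    using ij p q by (simp add: ptrace2_index divmod_lt sum.distrib sum_distrib_left)
  finally show ?thesis .
qed



lemma kron_idle_fixed:
  assumes L: "L \<in> carrier_mat (dA*dB) (dA*dB)" and idle: "idle \<in> carrier_vec dB"
    and Lid: "\<forall>\<phi> \<in> carrier_vec dA. L *\<^sub>v kron_vec \<phi> idle = kron_vec \<phi> idle"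
    and rho: "\<rho> \<in> carrier_mat dA dA"
  shows "L * kron_mat \<rho> (ket_bra idle) * dagger L = kron_mat \<rho> (ket_bra idle)"
proof -
  let ?K = "kron_mat \<rho> (ket_bra idle)"
  have Kc: "?K \<in> carrier_mat (dA*dB) (dA*dB)" using rho idle by (intro carrier_matI) auto
  have dpos: "dB > 0" if "p < dA*dB" for p using that by (cases dB) auto
  have Kidx: "?K $$ (p,p') = \<rho> $$ (p div dB, p' div dB) * (idle $ (p mod dB) * cnj (idle $ (p' mod dB)))"
    if "p < dA*dB" "p' < dA*dB" for p p'
    using that rho idle dpos[OF that(1)] by (simp add: kron_mat_def)
  have kv: "kron_vec \<phi> idle $ p = \<phi> $ (p div dB) * idle $ (p mod dB)" if "\<phi> \<in> carrier_vec dA" "p < dA*dB" for \<phi> p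
    using that idle by (simp add: kron_vec_def)
  have LK: "L * ?K = ?K"
  proof (rule eq_matI)
    fix p p' assume "p < dim_row ?K" "p' < dim_col ?K"
    hence pp: "p < dA*dB" "p' < dA*dB" using Kc by auto
    define \<phi> where "\<phi> = col \<rho> (p' div dB)"
    have \<phi>c: "\<phi> \<in> carrier_vec dA" using rho unfolding \<phi>_def by (metis carrier_matD(1) col_dim)
    have \<phi>i: "\<phi> $ a = \<rho> $$ (a, p' div dB)" if "a < dA" for a
      using that rho pp unfolding \<phi>_def by (simp add: less_mult_imp_div_less)
    have "(L * ?K) $$ (p,p') = (\<Sum>l<dA*dB. L $$ (p,l) * ?K $$ (l,p'))"
      by (rule mult_entry[OF L Kc pp])
    also have "\<dots> = (\<Sum>l<dA*dB. L $$ (p,l) * kron_vec \<phi> idle $ l) * cnj (idle $ (p' mod dB))"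
      unfolding sum_distrib_right
      by (intro sum.cong refl) (use pp rho in \<open>simp add: Kidx kv[OF \<phi>c] \<phi>i less_mult_imp_div_less algebra_simps\<close>)
    also have "\<dots> = (L *\<^sub>v kron_vec \<phi> idle) $ p * cnj (idle $ (p' mod dB))"
    proof -
      have "kron_vec \<phi> idle \<in> carrier_vec (dA*dB)" using \<phi>c idle by (intro carrier_vecI) simp
      thus ?thesis using mult_vec_entry[OF L _ pp(1), of "kron_vec \<phi> idle"] by simp
    qed
    also have "\<dots> = kron_vec \<phi> idle $ p * cnj (idle $ (p' mod dB))" using Lid \<phi>c by simp
    also have "\<dots> = ?K $$ (p,p')"
      using pp rho by (simp add: Kidx kv[OF \<phi>c] \<phi>i less_mult_imp_div_less algebra_simps)
    finally show "(L * ?K) $$ (p,p') = ?K $$ (p,p')" .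
  qed (use L Kc in auto)
  have KL: "?K * dagger L = ?K"
  proof (rule eq_matI)
    fix p p' assume "p < dim_row ?K" "p' < dim_col ?K"
    hence pp: "p < dA*dB" "p' < dA*dB" using Kc by auto
    define \<phi> where "\<phi> = vec dA (\<lambda>a. cnj (\<rho> $$ (p div dB, a)))"
    have \<phi>c: "\<phi> \<in> carrier_vec dA" by (simp add: \<phi>_def)
    have \<phi>i: "\<phi> $ a = cnj (\<rho> $$ (p div dB, a))" if "a < dA" for a
      using that unfolding \<phi>_def by simp
    have dL: "dagger L \<in> carrier_mat (dA*dB) (dA*dB)" using L by simp
    have "(?K * dagger L) $$ (p,p') = (\<Sum>l<dA*dB. ?K $$ (p,l) * dagger L $$ (l,p'))"
      by (rule mult_entry[OF Kc dL pp])
    also have "\<dots> = (\<Sum>l<dA*dB. ?K $$ (p,l) * cnj (L $$ (p',l)))"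
      using pp L by (intro sum.cong refl) simp
    also have "\<dots> = idle $ (p mod dB) * cnj (\<Sum>l<dA*dB. L $$ (p',l) * kron_vec \<phi> idle $ l)"
      unfolding sum_distrib_left cnj_sum
      by (intro sum.cong refl) (use pp rho in \<open>simp add: Kidx kv[OF \<phi>c] \<phi>i less_mult_imp_div_less algebra_simps\<close>)
    also have "\<dots> = idle $ (p mod dB) * cnj ((L *\<^sub>v kron_vec \<phi> idle) $ p')"
    proof -
      have "kron_vec \<phi> idle \<in> carrier_vec (dA*dB)" using \<phi>c idle by (intro carrier_vecI) simp
      thus ?thesis using mult_vec_entry[OF L _ pp(2), of "kron_vec \<phi> idle"] by simp
    qed
    also have "\<dots> = idle $ (p mod dB) * cnj (kron_vec \<phi> idle $ p')" using Lid \<phi>c by simp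
    also have "\<dots> = ?K $$ (p,p')"
      using pp rho by (simp add: Kidx kv[OF \<phi>c] \<phi>i less_mult_imp_div_less algebra_simps)
    finally show "(?K * dagger L) $$ (p,p') = ?K $$ (p,p')" .
  qed (use L Kc in auto)
  show ?thesis using LK KL by simp
qed

lemma ptrace_kron_idle:
  assumes idle: "idle \<in> carrier_vec dB" "vnorm idle = 1" and rho: "\<rho> \<in> carrier_mat dA dA"
  shows "ptrace2 dA dB (kron_mat \<rho> (ket_bra idle)) = \<rho>"
proof (rule eq_matI)
  fix i j assume "i < dim_row \<rho>" "j < dim_col \<rho>"
  hence ij: "i < dA" "j < dA" using rho by auto
  have s: "(\<Sum>b<dB. idle $ b * cnj (idle $ b)) = 1"
  proof -
    have "(\<Sum>b<dB. idle $ b * cnj (idle $ b)) = complex_of_real ((vnorm idle)^2)"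
      using idle(1) by (simp only: vnorm_sq cnj_mult_self of_real_sum, simp)
    thus ?thesis using idle(2) by simp
  qed
  have "ptrace2 dA dB (kron_mat \<rho> (ket_bra idle)) $$ (i,j) = (\<Sum>b<dB. \<rho> $$ (i,j) * (idle $ b * cnj (idle $ b)))"
    using ij rho idle by (simp add: ptrace2_index kron_mat_def divmod_lt)
  also have "\<dots> = \<rho> $$ (i,j)" using s by (simp flip: sum_distrib_left)
  finally show "ptrace2 dA dB (kron_mat \<rho> (ket_bra idle)) $$ (i,j) = \<rho> $$ (i,j)" .
qed (use rho in auto)



lemma ptrace_add:
  assumes "A \<in> carrier_mat (n*k) (n*k)" "B \<in> carrier_mat (n*k) (n*k)"
  shows "ptrace2 n k (A + B) = ptrace2 n k A + ptrace2 n k B"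
  by (rule eq_matI) (use assms in \<open>auto simp: ptrace2_index divmod_lt sum.distrib\<close>)

lemma ptrace_minus:
  assumes "A \<in> carrier_mat (n*k) (n*k)" "B \<in> carrier_mat (n*k) (n*k)"
  shows "ptrace2 n k (A - B) = ptrace2 n k A - ptrace2 n k B"
  by (rule eq_matI) (use assms in \<open>auto simp: ptrace2_index divmod_lt sum_subtractf\<close>)

lemma ptrace_smult:
  assumes "A \<in> carrier_mat (n*k) (n*k)"
  shows "ptrace2 n k (c \<cdot>\<^sub>m A) = c \<cdot>\<^sub>m ptrace2 n k A"
  by (rule eq_matI) (use assms in \<open>auto simp: ptrace2_index divmod_lt sum_distrib_left\<close>)

lemma sandwich_add:
  assumes L: "L \<in> carrier_mat N N" and "A \<in> carrier_mat N N" "B \<in> carrier_mat N N"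
  shows "L * (A + B) * dagger L = L * A * dagger L + L * B * dagger L"
proof -
  have dL: "dagger L \<in> carrier_mat N N" using L by simp
  have "L * (A + B) = L * A + L * B" using assms by (simp add: mult_add_distrib_mat)
  hence "L * (A + B) * dagger L = (L * A + L * B) * dagger L" by simp
  also have "\<dots> = L * A * dagger L + L * B * dagger L"
    using assms dL by (intro add_mult_distrib_mat) auto
  finally show ?thesis .
qed

lemma sandwich_smult:
  assumes L: "L \<in> carrier_mat N N" and "A \<in> carrier_mat N N"
  shows "L * (c \<cdot>\<^sub>m A) * dagger L = c \<cdot>\<^sub>m (L * A * dagger L)"
proof -
  have dL: "dagger L \<in> carrier_mat N N" using L by simp
  have "L * (c \<cdot>\<^sub>m A) = c \<cdot>\<^sub>m (L * A)" using assms by (simp add: mult_smult_distrib)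
  hence "L * (c \<cdot>\<^sub>m A) * dagger L = (c \<cdot>\<^sub>m (L * A)) * dagger L" by simp
  also have "\<dots> = c \<cdot>\<^sub>m (L * A * dagger L)"
    using assms dL by (intro mult_smult_assoc_mat[of _ N N]) auto
  finally show ?thesis .
qed



theorem proposition2:
  fixes dA dB dC :: nat
    and idle :: "complex vec" and L :: "complex mat"
    and \<xi> \<tau> v :: "complex vec" and \<pi>bar :: "complex mat"
  assumes dimC: "dC \<ge> dA * dB"
    and idle: "idle \<in> carrier_vec dB" "vnorm idle = 1"
    and L_sub: "subunitary (dA * dB) L"
    and L_idle: "\<forall>\<phi> \<in> carrier_vec dA. L *\<^sub>v kron_vec \<phi> idle = kron_vec \<phi> idle"
    and \<xi>: "\<xi> \<in> carrier_vec (dA * dB * dC)" "\<xi> \<noteq> 0\<^sub>v (dA * dB * dC)"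
    and \<tau>: "\<tau> \<in> carrier_vec (dA * dB * dC)"
    and \<pi>bar_psd: "psd (dA * dB) \<pi>bar"
    and balance: "ptrace2 dA dB (L * \<pi>bar * dagger L - \<pi>bar)
                  = ptrace2 dA (dB * dC) (ket_bra \<tau> - ket_bra \<xi>)"
    and v: "v \<in> carrier_vec (dA * dB * dC)"
    and purif: "ptrace2 (dA * dB) dC (ket_bra v) = \<pi>bar"
  shows "\<forall>T' :: nat. T' > 0 \<longrightarrow>
    (let \<pi> = (\<lambda>j. kron_mat
                   (complex_of_real ((real T' - real j) / real T') \<cdot>\<^sub>m ptrace2 dA (dB * dC) (ket_bra \<xi>)
                    + complex_of_real (real j / real T') \<cdot>\<^sub>m ptrace2 dA (dB * dC) (ket_bra \<tau>))
                   (ket_bra idle)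
                 + complex_of_real (1 / real T') \<cdot>\<^sub>m \<pi>bar);
         ket0 = vec 2 (\<lambda>i. if i = 0 then 1 else 0) :: complex vec;
         ket1 = vec 2 (\<lambda>i. if i = 1 then 1 else 0) :: complex vec
     in (\<forall>j<T'. psd (dA * dB) (\<pi> j))
        \<and> (\<forall>j. j + 2 \<le> T' \<longrightarrow> ptrace2 dA dB (\<pi> (j + 1)) = ptrace2 dA dB (L * \<pi> j * dagger L))
        \<and> constitutes_algorithm dA dB (dC * 2) L T' \<pi>
            (kron_vec \<xi> ket0 + complex_of_real (1 / sqrt (real T')) \<cdot>\<^sub>v kron_vec v ket1)
            (kron_vec \<tau> ket0 + complex_of_real (1 / sqrt (real T')) \<cdot>\<^sub>v kron_vec v ket1))"
proof (intro allI impI)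
  fix T' :: nat assume T': "T' > 0"
  define \<xi>A where "\<xi>A = ptrace2 dA (dB * dC) (ket_bra \<xi>)"
  define \<tau>A where "\<tau>A = ptrace2 dA (dB * dC) (ket_bra \<tau>)"
  define c where "c = complex_of_real (1 / real T')"
  define \<alpha> where "\<alpha> = (\<lambda>j::nat. complex_of_real ((real T' - real j) / real T'))"
  define \<beta> where "\<beta> = (\<lambda>j::nat. complex_of_real (real j / real T'))"
  define \<rho> where "\<rho> = (\<lambda>j. \<alpha> j \<cdot>\<^sub>m \<xi>A + \<beta> j \<cdot>\<^sub>m \<tau>A)"
  define \<pi> where "\<pi> = (\<lambda>j. kron_mat (\<rho> j) (ket_bra idle) + c \<cdot>\<^sub>m \<pi>bar)"
  define ket0 where "ket0 = (vec 2 (\<lambda>i. if i = 0 then 1 else 0) :: complex vec)"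
  define ket1 where "ket1 = (vec 2 (\<lambda>i. if i = 1 then 1 else 0) :: complex vec)"
  define s where "s = complex_of_real (1 / sqrt (real T'))"
  define x0 where "x0 = kron_vec \<xi> ket0 + s \<cdot>\<^sub>v kron_vec v ket1"
  define y0 where "y0 = kron_vec \<tau> ket0 + s \<cdot>\<^sub>v kron_vec v ket1"
  have main: "(\<forall>j<T'. psd (dA * dB) (\<pi> j))
        \<and> (\<forall>j. j + 2 \<le> T' \<longrightarrow> ptrace2 dA dB (\<pi> (j + 1)) = ptrace2 dA dB (L * \<pi> j * dagger L))
        \<and> constitutes_algorithm dA dB (dC * 2) L T' \<pi> x0 y0"
  proof -
    have Tpos: "real T' > 0" using T' by simp
    have Lc: "L \<in> carrier_mat (dA*dB) (dA*dB)" using L_sub subunitary_def by auto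
    have Pc: "\<pi>bar \<in> carrier_mat (dA*dB) (dA*dB)" using \<pi>bar_psd psd_def by auto
    have \<xi>c: "\<xi> \<in> carrier_vec (dA*(dB*dC))" using \<xi>(1) by (simp add: mult.assoc)
    have \<tau>c: "\<tau> \<in> carrier_vec (dA*(dB*dC))" using \<tau> by (simp add: mult.assoc)
    have vc: "v \<in> carrier_vec ((dA*dB)*dC)" using v by simp
    have \<xi>Ac: "\<xi>A \<in> carrier_mat dA dA" and \<tau>Ac: "\<tau>A \<in> carrier_mat dA dA"
      unfolding \<xi>A_def \<tau>A_def by (auto intro!: carrier_matI)
    have \<rho>c: "\<rho> j \<in> carrier_mat dA dA" for j using \<xi>Ac \<tau>Ac unfolding \<rho>_def by auto
    have Kc: "kron_mat (\<rho> j) (ket_bra idle) \<in> carrier_mat (dA*dB) (dA*dB)" for j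
      using \<rho>c[of j] idle(1) by (intro carrier_matI) auto
    have cPc: "c \<cdot>\<^sub>m \<pi>bar \<in> carrier_mat (dA*dB) (dA*dB)" using Pc by simp
    have \<pi>c: "\<pi> j \<in> carrier_mat (dA*dB) (dA*dB)" for j unfolding \<pi>_def using Kc cPc by simp
    have LPc: "L * \<pi>bar * dagger L \<in> carrier_mat (dA*dB) (dA*dB)" using Lc Pc by (meson dagger_carrier mult_carrier_mat)
    have E1: "ptrace2 dA dB (\<pi> j) = \<rho> j + c \<cdot>\<^sub>m ptrace2 dA dB \<pi>bar" for j
      unfolding \<pi>_def using ptrace_add[OF Kc cPc] ptrace_kron_idle[OF idle \<rho>c] ptrace_smult[OF Pc] by simp
    have E2: "ptrace2 dA dB (L * \<pi> j * dagger L) = \<rho> j + c \<cdot>\<^sub>m ptrace2 dA dB (L * \<pi>bar * dagger L)" for j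
    proof -
      have "L * \<pi> j * dagger L = kron_mat (\<rho> j) (ket_bra idle) + c \<cdot>\<^sub>m (L * \<pi>bar * dagger L)"
        unfolding \<pi>_def sandwich_add[OF Lc Kc cPc] sandwich_smult[OF Lc Pc]
          kron_idle_fixed[OF Lc idle(1) L_idle \<rho>c] ..
      thus ?thesis using ptrace_add[OF Kc] LPc ptrace_kron_idle[OF idle \<rho>c] ptrace_smult[OF LPc] by simp
    qed
    have Bal: "ptrace2 dA dB (L * \<pi>bar * dagger L) = ptrace2 dA dB \<pi>bar + (\<tau>A - \<xi>A)"
    proof -
      have kb: "ket_bra \<tau> \<in> carrier_mat (dA*(dB*dC)) (dA*(dB*dC))" "ket_bra \<xi> \<in> carrier_mat (dA*(dB*dC)) (dA*(dB*dC))"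
        using \<tau>c \<xi>c by (auto intro!: carrier_matI)
      have D: "ptrace2 dA dB (L * \<pi>bar * dagger L) - ptrace2 dA dB \<pi>bar = \<tau>A - \<xi>A"
        using balance ptrace_minus[OF LPc Pc] ptrace_minus[OF kb] unfolding \<tau>A_def \<xi>A_def by simp
      show ?thesis
      proof (rule eq_matI)
        fix i j assume "i < dim_row (ptrace2 dA dB \<pi>bar + (\<tau>A - \<xi>A))" "j < dim_col (ptrace2 dA dB \<pi>bar + (\<tau>A - \<xi>A))"
        hence ij: "i < dA" "j < dA" using \<xi>Ac by auto
        have "(ptrace2 dA dB (L * \<pi>bar * dagger L) - ptrace2 dA dB \<pi>bar) $$ (i,j) = (\<tau>A - \<xi>A) $$ (i,j)"
          using D by simp
        thus "ptrace2 dA dB (L * \<pi>bar * dagger L) $$ (i,j) = (ptrace2 dA dB \<pi>bar + (\<tau>A - \<xi>A)) $$ (i,j)"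
          using ij \<tau>Ac \<xi>Ac by (simp add: algebra_simps)
      qed (use \<xi>Ac in auto)
    qed
    have \<alpha>S: "\<alpha> (Suc j) = \<alpha> j - c" for j
    proof -
      have "(real T' - real (Suc j)) / real T' = (real T' - real j) / real T' - 1 / real T'"
        using Tpos by (simp add: field_simps)
      thus ?thesis unfolding \<alpha>_def c_def by (simp only: of_real_diff)
    qed
    have \<beta>S: "\<beta> (Suc j) = \<beta> j + c" for j
    proof -
      have "real (Suc j) / real T' = real j / real T' + 1 / real T'"
        using Tpos by (simp add: field_simps)
      thus ?thesis unfolding \<beta>_def c_def by (simp only: of_real_add)
    qed
    have PAc: "ptrace2 dA dB \<pi>bar \<in> carrier_mat dA dA" by (intro carrier_matI) auto
    have C1: "\<forall>j<T'. psd (dA * dB) (\<pi> j)"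
    proof (intro allI impI)
      fix j assume j: "j < T'"
      have a: "(real T' - real j) / real T' \<ge> 0" using j Tpos by simp
      have b: "real j / real T' \<ge> 0" using Tpos by simp
      have c0: "1 / real T' \<ge> 0" using Tpos by simp
      have g\<xi>: "isgram dA \<xi>A" unfolding \<xi>A_def by (rule isgram_ptrace[OF \<xi>c])
      have g\<tau>: "isgram dA \<tau>A" unfolding \<tau>A_def by (rule isgram_ptrace[OF \<tau>c])
      have g\<rho>: "isgram dA (\<rho> j)" unfolding \<rho>_def \<alpha>_def \<beta>_def
        by (intro isgram_add isgram_smult g\<xi> g\<tau> a b)
      have gP: "isgram (dA*dB) \<pi>bar" using isgram_ptrace[OF vc] purif by simp
      have "isgram (dA*dB) (\<pi> j)" unfolding \<pi>_def c_def
        by (intro isgram_add isgram_kron isgram_smult g\<rho> idle(1) gP c0)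
      thus "psd (dA * dB) (\<pi> j)" by (rule isgram_psd)
    qed
    have stepeq: "ptrace2 dA dB (\<pi> (Suc j)) = ptrace2 dA dB (L * \<pi> j * dagger L)" for j
    proof -
      have "\<rho> (Suc j) + c \<cdot>\<^sub>m ptrace2 dA dB \<pi>bar = \<rho> j + c \<cdot>\<^sub>m (ptrace2 dA dB \<pi>bar + (\<tau>A - \<xi>A))"
      proof (rule eq_matI)
        fix i i' assume "i < dim_row (\<rho> j + c \<cdot>\<^sub>m (ptrace2 dA dB \<pi>bar + (\<tau>A - \<xi>A)))"
          "i' < dim_col (\<rho> j + c \<cdot>\<^sub>m (ptrace2 dA dB \<pi>bar + (\<tau>A - \<xi>A)))"
        hence ii: "i < dA" "i' < dA" using \<rho>c[of j] \<xi>Ac by auto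
        show "(\<rho> (Suc j) + c \<cdot>\<^sub>m ptrace2 dA dB \<pi>bar) $$ (i,i') = (\<rho> j + c \<cdot>\<^sub>m (ptrace2 dA dB \<pi>bar + (\<tau>A - \<xi>A))) $$ (i,i')"
          using ii \<xi>Ac \<tau>Ac PAc unfolding \<rho>_def \<alpha>S \<beta>S by (simp add: algebra_simps)
      qed (use \<rho>c PAc \<xi>Ac in auto)
      thus ?thesis unfolding E1 E2 Bal .
    qed
    have C2: "\<forall>j. j + 2 \<le> T' \<longrightarrow> ptrace2 dA dB (\<pi> (j + 1)) = ptrace2 dA dB (L * \<pi> j * dagger L)"
      using stepeq by simp
    have Gpi: "isgram (dA*dB) (\<pi> j)" if j: "j < T'" for j
    proof -
      have a: "(real T' - real j) / real T' \<ge> 0" using j Tpos by simp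
      have b: "real j / real T' \<ge> 0" using Tpos by simp
      have c0: "1 / real T' \<ge> 0" using Tpos by simp
      have g\<xi>: "isgram dA \<xi>A" unfolding \<xi>A_def by (rule isgram_ptrace[OF \<xi>c])
      have g\<tau>: "isgram dA \<tau>A" unfolding \<tau>A_def by (rule isgram_ptrace[OF \<tau>c])
      have g\<rho>: "isgram dA (\<rho> j)" unfolding \<rho>_def \<alpha>_def \<beta>_def
        by (intro isgram_add isgram_smult g\<xi> g\<tau> a b)
      have gP: "isgram (dA*dB) \<pi>bar" using isgram_ptrace[OF vc] purif by simp
      show "isgram (dA*dB) (\<pi> j)" unfolding \<pi>_def c_def
        by (intro isgram_add isgram_kron isgram_smult g\<rho> idle(1) gP c0)
    qed
    have NdC: "dA * dB \<le> dC * 2" using dimC by simp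
    have "\<forall>j. \<exists>\<psi>. j < T' \<longrightarrow> \<psi> \<in> carrier_vec (dA*dB*(dC*2)) \<and> ptrace2 (dA*dB) (dC*2) (ket_bra \<psi>) = \<pi> j"
      using isgram_purify[OF Gpi NdC] by blast
    then obtain \<Psi> where \<Psi>: "\<And>j. j < T' \<Longrightarrow> \<Psi> j \<in> carrier_vec (dA*dB*(dC*2)) \<and> ptrace2 (dA*dB) (dC*2) (ket_bra (\<Psi> j)) = \<pi> j"
      by metis
    have cv: "carrier_vec (dA*dB*(dC*2)) = carrier_vec (dA*(dB*(dC*2)))" by (simp add: mult.assoc)
    define L\<Psi> where "L\<Psi> = (\<lambda>j. kron_mat L (1\<^sub>m (dC*2)) *\<^sub>v \<Psi> j)"
    have L\<Psi>c: "L\<Psi> j \<in> carrier_vec (dA*dB*(dC*2))" for j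
      unfolding L\<Psi>_def using Lc by (intro carrier_vecI) simp
    have redL: "ptrace2 dA (dB*(dC*2)) (ket_bra (L\<Psi> j)) = ptrace2 dA dB (L * \<pi> j * dagger L)" if "j < T'" for j
      unfolding ptrace_comp[of dA dB "dC*2"] L\<Psi>_def sandwich_ptrace[OF Lc \<Psi>[OF that, THEN conjunct1]] \<Psi>[OF that, THEN conjunct2] ..
    have red\<Psi>: "ptrace2 dA (dB*(dC*2)) (ket_bra (\<Psi> j)) = ptrace2 dA dB (\<pi> j)" if "j < T'" for j
      unfolding ptrace_comp[of dA dB "dC*2"] \<Psi>[OF that, THEN conjunct2] ..
    have ss: "s * cnj s = c" unfolding s_def c_def using Tpos
      by (simp flip: of_real_mult add: real_sqrt_mult[symmetric])
    have vc2: "v \<in> carrier_vec (dA*(dB*dC))" using v by (simp add: mult.assoc)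
    have vA: "ptrace2 dA (dB*dC) (ket_bra v) = ptrace2 dA dB \<pi>bar"
      unfolding ptrace_comp[of dA dB dC] purif ..
    have dd: "dB*(dC*2) = dB*dC*2" by simp
    have x0c: "x0 \<in> carrier_vec (dA*(dB*(dC*2)))" unfolding x0_def ket0_def ket1_def using \<xi>(1) v
      by (intro carrier_vecI) (simp add: mult.assoc)
    have y0c: "y0 \<in> carrier_vec (dA*(dB*(dC*2)))" unfolding y0_def ket0_def ket1_def using \<tau> v
      by (intro carrier_vecI) (simp add: mult.assoc)
    have redx: "ptrace2 dA (dB*(dC*2)) (ket_bra x0) = \<xi>A + c \<cdot>\<^sub>m ptrace2 dA dB \<pi>bar"
    proof (rule eq_matI)
      fix i j assume "i < dim_row (\<xi>A + c \<cdot>\<^sub>m ptrace2 dA dB \<pi>bar)" "j < dim_col (\<xi>A + c \<cdot>\<^sub>m ptrace2 dA dB \<pi>bar)"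
      hence ij: "i < dA" "j < dA" using \<xi>Ac by auto
      show "ptrace2 dA (dB*(dC*2)) (ket_bra x0) $$ (i,j) = (\<xi>A + c \<cdot>\<^sub>m ptrace2 dA dB \<pi>bar) $$ (i,j)"
        unfolding dd x0_def ket0_def ket1_def qubit_ptrace[OF \<xi>c vc2 ij] ss vA
        using ij \<xi>Ac unfolding \<xi>A_def by simp
    qed (use \<xi>Ac in auto)
    have redy: "ptrace2 dA (dB*(dC*2)) (ket_bra y0) = \<tau>A + c \<cdot>\<^sub>m ptrace2 dA dB \<pi>bar"
    proof (rule eq_matI)
      fix i j assume "i < dim_row (\<tau>A + c \<cdot>\<^sub>m ptrace2 dA dB \<pi>bar)" "j < dim_col (\<tau>A + c \<cdot>\<^sub>m ptrace2 dA dB \<pi>bar)"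
      hence ij: "i < dA" "j < dA" using \<tau>Ac by auto
      show "ptrace2 dA (dB*(dC*2)) (ket_bra y0) $$ (i,j) = (\<tau>A + c \<cdot>\<^sub>m ptrace2 dA dB \<pi>bar) $$ (i,j)"
        unfolding dd y0_def ket0_def ket1_def qubit_ptrace[OF \<tau>c vc2 ij] ss vA
        using ij \<tau>Ac unfolding \<tau>A_def by simp
    qed (use \<tau>Ac in auto)
    have \<alpha>0: "\<alpha> 0 = 1" unfolding \<alpha>_def using Tpos by simp
    have \<beta>0: "\<beta> 0 = 0" unfolding \<beta>_def by simp
    have red0: "ptrace2 dA (dB*(dC*2)) (ket_bra x0) = ptrace2 dA (dB*(dC*2)) (ket_bra (\<Psi> 0))"
    proof -
      have "\<rho> 0 = \<xi>A" unfolding \<rho>_def \<alpha>0 \<beta>0 using \<xi>Ac \<tau>Ac by (intro eq_matI) auto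
      thus ?thesis unfolding redx red\<Psi>[OF T'] E1 by simp
    qed
    have \<alpha>T: "\<alpha> (T' - 1) = c" unfolding \<alpha>_def c_def using T' by (simp add: of_nat_diff)
    have \<beta>T: "\<beta> (T' - 1) + c = 1" unfolding \<beta>_def c_def using T' Tpos
      by (simp add: of_nat_diff field_simps flip: of_real_add)
    have redT: "ptrace2 dA (dB*(dC*2)) (ket_bra (L\<Psi> (T' - 1))) = ptrace2 dA (dB*(dC*2)) (ket_bra y0)"
    proof -
      have "ptrace2 dA dB (L * \<pi> (T'-1) * dagger L) = \<tau>A + c \<cdot>\<^sub>m ptrace2 dA dB \<pi>bar"
      proof (rule eq_matI)
        fix i j assume "i < dim_row (\<tau>A + c \<cdot>\<^sub>m ptrace2 dA dB \<pi>bar)" "j < dim_col (\<tau>A + c \<cdot>\<^sub>m ptrace2 dA dB \<pi>bar)"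
        hence ij: "i < dA" "j < dA" using \<tau>Ac by auto
        have e: "\<beta> (T' - 1) = 1 - c" using \<beta>T by (simp add: algebra_simps)
        show "ptrace2 dA dB (L * \<pi> (T'-1) * dagger L) $$ (i,j) = (\<tau>A + c \<cdot>\<^sub>m ptrace2 dA dB \<pi>bar) $$ (i,j)"
          unfolding E2 Bal using ij \<tau>Ac \<xi>Ac PAc unfolding \<rho>_def \<alpha>T e by (simp add: algebra_simps)
      qed (use \<tau>Ac in auto)
      moreover have "T' - 1 < T'" using T' by simp
      ultimately show ?thesis unfolding redL[OF \<open>T' - 1 < T'\<close>] redy by simp
    qed
    have \<Psi>c: "\<Psi> j \<in> carrier_vec (dA*(dB*(dC*2)))" if "j < T'" for j using \<Psi>[OF that] cv by auto
    have L\<Psi>c': "L\<Psi> j \<in> carrier_vec (dA*(dB*(dC*2)))" for j using L\<Psi>c[of j] cv by auto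
    obtain U0 where U0: "unitary (dB*(dC*2)) U0" "kron_mat (1\<^sub>m dA) U0 *\<^sub>v x0 = \<Psi> 0"
      using uhlmann_vec[OF x0c \<Psi>c[OF T'] red0] by blast
    obtain UT where UT: "unitary (dB*(dC*2)) UT" "kron_mat (1\<^sub>m dA) UT *\<^sub>v L\<Psi> (T' - 1) = y0"
      using uhlmann_vec[OF L\<Psi>c' y0c redT] by blast
    have "\<forall>k. \<exists>W. 0 < k \<and> k < T' \<longrightarrow> unitary (dB*(dC*2)) W \<and> kron_mat (1\<^sub>m dA) W *\<^sub>v L\<Psi> (k - 1) = \<Psi> k"
    proof
      fix k
      show "\<exists>W. 0 < k \<and> k < T' \<longrightarrow> unitary (dB*(dC*2)) W \<and> kron_mat (1\<^sub>m dA) W *\<^sub>v L\<Psi> (k - 1) = \<Psi> k"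
      proof (cases "0 < k \<and> k < T'")
        case True
        hence k1: "k - 1 < T'" and kS: "Suc (k - 1) = k" by auto
        have "ptrace2 dA (dB*(dC*2)) (ket_bra (L\<Psi> (k - 1))) = ptrace2 dA (dB*(dC*2)) (ket_bra (\<Psi> k))"
          unfolding redL[OF k1] red\<Psi>[OF conjunct2[OF True]] stepeq[of "k-1", symmetric] kS ..
        from uhlmann_vec[OF L\<Psi>c' \<Psi>c[OF conjunct2[OF True]] this] show ?thesis by blast
      qed blast
    qed
    then obtain Um where Um: "\<And>k. 0 < k \<Longrightarrow> k < T' \<Longrightarrow> unitary (dB*(dC*2)) (Um k) \<and> kron_mat (1\<^sub>m dA) (Um k) *\<^sub>v L\<Psi> (k - 1) = \<Psi> k"
      by metis
    define U where "U = (\<lambda>k. if k = 0 then U0 else if k < T' then Um k else if k = T' then UT else 1\<^sub>m (dB*(dC*2)))"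
    have Uu: "unitary (dB*(dC*2)) (U j)" for j
      unfolding U_def using U0 UT Um by (auto simp: unitary_def)
    have alg: "alg_state dA (dC*2) L U x0 j = \<Psi> j" if "j < T'" for j
      using that
    proof (induction j)
      case 0
      show ?case using U0 by (simp add: U_def)
    next
      case (Suc j)
      have "alg_state dA (dC*2) L U x0 (Suc j) = kron_mat (1\<^sub>m dA) (Um (Suc j)) *\<^sub>v L\<Psi> j"
        using Suc.IH Suc.prems by (simp add: U_def L\<Psi>_def)
      also have "\<dots> = \<Psi> (Suc j)" using Um[of "Suc j"] Suc.prems by simp
      finally show ?case .
    qed
    have fin: "alg_state dA (dC*2) L U x0 T' = y0"
    proof -
      obtain m where m: "T' = Suc m" using T' by (cases T') auto
      have mT: "m < T'" and m1: "T' - 1 = m" using m by auto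
      have USm: "U (Suc m) = UT" unfolding U_def using m by simp
      have "alg_state dA (dC*2) L U x0 (Suc m) = kron_mat (1\<^sub>m dA) (U (Suc m)) *\<^sub>v (kron_mat L (1\<^sub>m (dC*2)) *\<^sub>v alg_state dA (dC*2) L U x0 m)"
        by simp
      also have "\<dots> = kron_mat (1\<^sub>m dA) UT *\<^sub>v L\<Psi> (T' - 1)"
        unfolding USm alg[OF mT] m1 L\<Psi>_def ..
      also have "\<dots> = y0" using UT by simp
      finally show ?thesis using m by simp
    qed
    have C3: "constitutes_algorithm dA dB (dC * 2) L T' \<pi> x0 y0"
      unfolding constitutes_algorithm_def
    proof (intro exI[of _ U] conjI allI impI)
      fix j assume "j < T'"
      thus "\<pi> j = ptrace2 (dA * dB) (dC * 2) (ket_bra (alg_state dA (dC * 2) L U x0 j))"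
        using alg \<Psi> by simp
    qed (use Uu fin in auto)
    show ?thesis using C1 C2 C3 by blast
  qed
  show "let \<pi> = (\<lambda>j. kron_mat
                   (complex_of_real ((real T' - real j) / real T') \<cdot>\<^sub>m ptrace2 dA (dB * dC) (ket_bra \<xi>)
                    + complex_of_real (real j / real T') \<cdot>\<^sub>m ptrace2 dA (dB * dC) (ket_bra \<tau>))
                   (ket_bra idle)
                 + complex_of_real (1 / real T') \<cdot>\<^sub>m \<pi>bar);
         ket0 = vec 2 (\<lambda>i. if i = 0 then 1 else 0) :: complex vec;
         ket1 = vec 2 (\<lambda>i. if i = 1 then 1 else 0) :: complex vec
     in (\<forall>j<T'. psd (dA * dB) (\<pi> j))
        \<and> (\<forall>j. j + 2 \<le> T' \<longrightarrow> ptrace2 dA dB (\<pi> (j + 1)) = ptrace2 dA dB (L * \<pi> j * dagger L))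
        \<and> constitutes_algorithm dA dB (dC * 2) L T' \<pi>
            (kron_vec \<xi> ket0 + complex_of_real (1 / sqrt (real T')) \<cdot>\<^sub>v kron_vec v ket1)
            (kron_vec \<tau> ket0 + complex_of_real (1 / sqrt (real T')) \<cdot>\<^sub>v kron_vec v ket1)"
    using main unfolding Let_def \<pi>_def \<rho>_def \<alpha>_def \<beta>_def c_def \<xi>A_def \<tau>A_def x0_def y0_def s_def ket0_def ket1_def .
qed

end
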